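(* Let $(S,\lambda_S^\bullet,\mu_S^{(0)})$, $(G,\lambda_G^\bullet,\mu_G^{(0)})$, $(T,\lambda_T^\bullet,\mu_T^{(0)})$ be Haar groupoids and $p:S\to G$, $q:T\to G$ homomorphisms of Haar groupoids, with weak pullback $P$. For $u=(s,g,t)\in P^{(0)}$ put $\lambda_P^{u}=\lambda_S^s\times\delta_g\times\lambda_T^t$. Then $\lambda_P^\bullet=\{\lambda_P^u\}_{u\in P^{(0)}}$ is a continuous left Haar system for $P$.
   Context: For a groupoid $G$: unit space $G^{(0)}$, range/source $r,d$, $G^u=r^{-1}(u)$. A system of measures on a Borel map $\pi:X\to Y$ is a family $\{\lambda^y\}_{y\in Y}$ of positive Borel measures on $X$ with $\lambda^y$ concentrated on $\pi^{-1}(y)$. A continuous left Haar system on a groupoid $G$ is a system of measures $\lambda^\bullet$ on $r:G\to G^{(0)}$ which is continuous ($u\mapsto\int f\,d\lambda^u$ continuous on $G^{(0)}$ for every continuous compactly supported $f\ge0$ on $G$), left invariant ($\lambda^{d(x)}(E)=\lambda^{r(x)}(x\cdot(E\cap G^{d(x)}))$ for all $x\in G$ and Borel $E\subseteq G$), and positive on open sets ($\lambda^u(A)>0$ for every open $A$ with $A\cap G^u\ne\emptyset$). Induced measure of a Radon $\mu^{(0)}$ on $G^{(0)}$: $\mu(E)=\int\lambda^u(E)\,d\mu^{(0)}(u)$; $\mu^{(0)}$ is quasi-invariant if $\mu\sim\mu^{-1}$, $\mu^{-1}(E)=\mu(E^{-1})$. A Haar groupoid $(G,\lambda^\bullet,\mu^{(0)})$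 is a second countable, locally compact, Hausdorff topological groupoid with a continuous left Haar system and a non-zero quasi-invariant Radon measure on $G^{(0)}$. A homomorphism of Haar groupoids is a continuous groupoid homomorphism $p$ with $p_*(\mu)\sim\nu$ for the induced measures. The weak pullback is $P=\{(s,g,t)\in S\times G\times T: r_G(g)=r_G(p(s)),\ d_G(g)=r_G(q(t))\}$ with subspace topology; composable pairs $((s,g,t),(\sigma,h,\tau))$ are those with $r_S(\sigma)=d_S(s)$, $r_T(\tau)=d_T(t)$, $h=p(s)^{-1}gq(t)$, product $(s\sigma,g,t\tau)$, inverse $(s^{-1},p(s)^{-1}gq(t),t^{-1})$, $r_P(s,g,t)=(r_S(s),g,r_T(t))$, $d_P(s,g,t)=(d_S(s),p(s)^{-1}gq(t),d_T(t))$, and $P^{(0)}=\{(s,g,t):s\in S^{(0)},t\in T^{(0)},r_G(g)=p(s),d_G(g)=q(t)\}$. The measure $\lambda_S^s\times\delta_g\times\lambda_T^t$ is a measure on $S\times G\times T$ ($\delta_g$ the Dirac mass), regarded as a measure on $P$. *)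

theory Defs
  imports "HOL-Analysis.Analysis" "HOL-Probability.Probability"
begin

definition borel_of :: "'a topology \<Rightarrow> 'a measure" where
  "borel_of X = sigma (topspace X) {U. openin X U}"

text \<open>A (topological) groupoid is given by its space of arrows (a topology whose
  topspace is the set of arrows), its unit space, range map, source map (called d),
  partial multiplication and inverse.\<close>

record 'a tgroupoid =
  gtop   :: "'a topology"
  gunits :: "'a set"
  gr     :: "'a \<Rightarrow> 'a"
  gd     :: "'a \<Rightarrow> 'a"
  gmul   :: "'a \<Rightarrow> 'a \<Rightarrow> 'a"
  ginv   :: "'a \<Rightarrow> 'a"

abbreviation garr :: "('a, 'b) tgroupoid_scheme \<Rightarrow> 'a set" where
  "garr G \<equiv> topspace (gtop G)"

definition composable :: "('a, 'b) tgroupoid_scheme \<Rightarrow> ('a \<times> 'a) set" where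
  "composable G = {(x, y). x \<in> garr G \<and> y \<in> garr G \<and> gd G x = gr G y}"

definition groupoid :: "('a, 'b) tgroupoid_scheme \<Rightarrow> bool" where
  "groupoid G \<longleftrightarrow>
     gunits G \<subseteq> garr G \<and>
     (\<forall>x\<in>garr G. gr G x \<in> gunits G \<and> gd G x \<in> gunits G) \<and>
     (\<forall>u\<in>gunits G. gr G u = u \<and> gd G u = u) \<and>
     (\<forall>(x, y)\<in>composable G. gmul G x y \<in> garr G \<and>
         gr G (gmul G x y) = gr G x \<and> gd G (gmul G x y) = gd G y) \<and>
     (\<forall>x\<in>garr G. \<forall>y\<in>garr G. \<forall>z\<in>garr G. gd G x = gr G y \<longrightarrow> gd G y = gr G z \<longrightarrow>
         gmul G (gmul G x y) z = gmul G x (gmul G y z)) \<and>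
     (\<forall>x\<in>garr G. gmul G (gr G x) x = x \<and> gmul G x (gd G x) = x) \<and>
     (\<forall>x\<in>garr G. ginv G x \<in> garr G \<and> gr G (ginv G x) = gd G x \<and> gd G (ginv G x) = gr G x \<and>
         gmul G x (ginv G x) = gr G x \<and> gmul G (ginv G x) x = gd G x)"

definition topological_groupoid :: "('a, 'b) tgroupoid_scheme \<Rightarrow> bool" where
  "topological_groupoid G \<longleftrightarrow> groupoid G \<and>
     continuous_map (gtop G) (gtop G) (gr G) \<and>
     continuous_map (gtop G) (gtop G) (gd G) \<and>
     continuous_map (gtop G) (gtop G) (ginv G) \<and>
     continuous_map (subtopology (prod_topology (gtop G) (gtop G)) (composable G)) (gtop G)
        (\<lambda>(x, y). gmul G x y)"

definition lcsc_groupoid :: "('a, 'b) tgroupoid_scheme \<Rightarrow> bool" where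
  "lcsc_groupoid G \<longleftrightarrow> topological_groupoid G \<and> second_countable (gtop G) \<and>
     locally_compact_space (gtop G) \<and> Hausdorff_space (gtop G)"

definition rfib :: "('a, 'b) tgroupoid_scheme \<Rightarrow> 'a \<Rightarrow> 'a set" where
  "rfib G u = {x \<in> garr G. gr G x = u}"

definition ltrans :: "('a, 'b) tgroupoid_scheme \<Rightarrow> 'a \<Rightarrow> 'a set \<Rightarrow> 'a set" where
  "ltrans G x A = (\<lambda>y. gmul G x y) ` A"

definition system_of_measures :: "('a, 'b) tgroupoid_scheme \<Rightarrow> ('a \<Rightarrow> 'a measure) \<Rightarrow> bool" where
  "system_of_measures G lam \<longleftrightarrow>
     (\<forall>u\<in>gunits G. sets (lam u) = sets (borel_of (gtop G)) \<and> space (lam u) = garr G \<and>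
        emeasure (lam u) (garr G - rfib G u) = 0)"

definition cc_nonneg :: "'a topology \<Rightarrow> ('a \<Rightarrow> real) \<Rightarrow> bool" where
  "cc_nonneg X f \<longleftrightarrow> continuous_map X euclidean f \<and> (\<forall>x\<in>topspace X. 0 \<le> f x) \<and>
     (\<exists>K. compactin X K \<and> (\<forall>x\<in>topspace X - K. f x = 0))"

definition continuous_system :: "('a, 'b) tgroupoid_scheme \<Rightarrow> ('a \<Rightarrow> 'a measure) \<Rightarrow> bool" where
  "continuous_system G lam \<longleftrightarrow>
     (\<forall>f. cc_nonneg (gtop G) f \<longrightarrow>
        (\<forall>u\<in>gunits G. (\<integral>\<^sup>+ x. ennreal (f x) \<partial>lam u) < \<infinity>) \<and>
        continuous_map (subtopology (gtop G) (gunits G)) euclidean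
           (\<lambda>u. enn2real (\<integral>\<^sup>+ x. ennreal (f x) \<partial>lam u)))"

definition left_invariant :: "('a, 'b) tgroupoid_scheme \<Rightarrow> ('a \<Rightarrow> 'a measure) \<Rightarrow> bool" where
  "left_invariant G lam \<longleftrightarrow>
     (\<forall>x\<in>garr G. \<forall>E\<in>sets (borel_of (gtop G)).
        emeasure (lam (gd G x)) E = emeasure (lam (gr G x)) (ltrans G x (E \<inter> rfib G (gd G x))))"

definition positive_on_open :: "('a, 'b) tgroupoid_scheme \<Rightarrow> ('a \<Rightarrow> 'a measure) \<Rightarrow> bool" where
  "positive_on_open G lam \<longleftrightarrow>
     (\<forall>u\<in>gunits G. \<forall>A. openin (gtop G) A \<and> A \<inter> rfib G u \<noteq> {} \<longrightarrow> emeasure (lam u) A > 0)"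

definition cont_left_haar_system :: "('a, 'b) tgroupoid_scheme \<Rightarrow> ('a \<Rightarrow> 'a measure) \<Rightarrow> bool" where
  "cont_left_haar_system G lam \<longleftrightarrow> system_of_measures G lam \<and> continuous_system G lam \<and>
     left_invariant G lam \<and> positive_on_open G lam"

text \<open>Radon measure on the unit space (a Borel measure finite on compact sets; in a
  second countable locally compact Hausdorff space these are exactly the Radon measures).\<close>
definition radon_on :: "'a topology \<Rightarrow> 'a measure \<Rightarrow> bool" where
  "radon_on X m \<longleftrightarrow> sets m = sets (borel_of X) \<and> space m = topspace X \<and>
     (\<forall>K. compactin X K \<longrightarrow> emeasure m K < \<infinity>)"

definition induced :: "('a \<Rightarrow> 'a measure) \<Rightarrow> 'a measure \<Rightarrow> 'a set \<Rightarrow> ennreal" where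
  "induced lam mu0 E = (\<integral>\<^sup>+ u. emeasure (lam u) E \<partial>mu0)"

definition ginvset :: "('a, 'b) tgroupoid_scheme \<Rightarrow> 'a set \<Rightarrow> 'a set" where
  "ginvset G E = ginv G ` E"

definition quasi_invariant :: "('a, 'b) tgroupoid_scheme \<Rightarrow> ('a \<Rightarrow> 'a measure) \<Rightarrow> 'a measure \<Rightarrow> bool" where
  "quasi_invariant G lam mu0 \<longleftrightarrow>
     (\<forall>E\<in>sets (borel_of (gtop G)).
        induced lam mu0 E = 0 \<longleftrightarrow> induced lam mu0 (ginvset G E) = 0)"

definition haar_groupoid :: "('a, 'b) tgroupoid_scheme \<Rightarrow> ('a \<Rightarrow> 'a measure) \<Rightarrow> 'a measure \<Rightarrow> bool" where
  "haar_groupoid G lam mu0 \<longleftrightarrow> lcsc_groupoid G \<and> cont_left_haar_system G lam \<and>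
     radon_on (subtopology (gtop G) (gunits G)) mu0 \<and> emeasure mu0 (gunits G) \<noteq> 0 \<and>
     quasi_invariant G lam mu0"

definition groupoid_hom :: "('a, 'b) tgroupoid_scheme \<Rightarrow> ('c, 'd) tgroupoid_scheme \<Rightarrow> ('a \<Rightarrow> 'c) \<Rightarrow> bool" where
  "groupoid_hom S G p \<longleftrightarrow> (\<forall>x\<in>garr S. p x \<in> garr G) \<and>
     (\<forall>(x, y)\<in>composable S. gmul G (p x) (p y) = p (gmul S x y) \<and> gd G (p x) = gr G (p y))"

definition haar_hom ::
  "('a, 'b) tgroupoid_scheme \<Rightarrow> ('a \<Rightarrow> 'a measure) \<Rightarrow> 'a measure \<Rightarrow>
   ('c, 'd) tgroupoid_scheme \<Rightarrow> ('c \<Rightarrow> 'c measure) \<Rightarrow> 'c measure \<Rightarrow> ('a \<Rightarrow> 'c) \<Rightarrow> bool" where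
  "haar_hom S lamS muS G lamG muG p \<longleftrightarrow>
     continuous_map (gtop S) (gtop G) p \<and> groupoid_hom S G p \<and>
     (\<forall>E\<in>sets (borel_of (gtop G)).
        induced lamS muS (p -` E \<inter> garr S) = 0 \<longleftrightarrow> induced lamG muG E = 0)"

definition wp_set ::
  "('s, 'x) tgroupoid_scheme \<Rightarrow> ('g, 'y) tgroupoid_scheme \<Rightarrow> ('t, 'z) tgroupoid_scheme \<Rightarrow>
   ('s \<Rightarrow> 'g) \<Rightarrow> ('t \<Rightarrow> 'g) \<Rightarrow> ('s \<times> 'g \<times> 't) set" where
  "wp_set S G T p q = {(s, g, t). s \<in> garr S \<and> g \<in> garr G \<and> t \<in> garr T \<and>
      gr G g = gr G (p s) \<and> gd G g = gr G (q t)}"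

definition weak_pullback ::
  "('s, 'x) tgroupoid_scheme \<Rightarrow> ('g, 'y) tgroupoid_scheme \<Rightarrow> ('t, 'z) tgroupoid_scheme \<Rightarrow>
   ('s \<Rightarrow> 'g) \<Rightarrow> ('t \<Rightarrow> 'g) \<Rightarrow> ('s \<times> 'g \<times> 't) tgroupoid" where
  "weak_pullback S G T p q =
    \<lparr> gtop = subtopology (prod_topology (gtop S) (prod_topology (gtop G) (gtop T))) (wp_set S G T p q),
      gunits = {(s, g, t). s \<in> gunits S \<and> t \<in> gunits T \<and> g \<in> garr G \<and> gr G g = p s \<and> gd G g = q t},
      gr = (\<lambda>(s, g, t). (gr S s, g, gr T t)),
      gd = (\<lambda>(s, g, t). (gd S s, gmul G (gmul G (ginv G (p s)) g) (q t), gd T t)),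
      gmul = (\<lambda>(s, g, t) (\<sigma>, h, \<tau>). (gmul S s \<sigma>, g, gmul T t \<tau>)),
      ginv = (\<lambda>(s, g, t). (ginv S s, gmul G (gmul G (ginv G (p s)) g) (q t), ginv T t)) \<rparr>"

text \<open>The system \<open>\<lambda>_P^{(s,g,t)} = \<lambda>_S^s \<times> \<delta>_g \<times> \<lambda>_T^t\<close>, a measure on
  \<open>S \<times> G \<times> T\<close> regarded as a (Borel) measure on \<open>P\<close>.\<close>
definition pullback_system ::
  "('s, 'x) tgroupoid_scheme \<Rightarrow> ('g, 'y) tgroupoid_scheme \<Rightarrow> ('t, 'z) tgroupoid_scheme \<Rightarrow>
   ('s \<Rightarrow> 'g) \<Rightarrow> ('t \<Rightarrow> 'g) \<Rightarrow> ('s \<Rightarrow> 's measure) \<Rightarrow> ('t \<Rightarrow> 't measure) \<Rightarrow>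
   ('s \<times> 'g \<times> 't) \<Rightarrow> ('s \<times> 'g \<times> 't) measure" where
  "pullback_system S G T p q lamS lamT =
     (\<lambda>(s, g, t). measure_of (wp_set S G T p q)
        (sets (borel_of (gtop (weak_pullback S G T p q))))
        (\<lambda>E. emeasure (lamS s \<Otimes>\<^sub>M (return (borel_of (gtop G)) g \<Otimes>\<^sub>M lamT t)) E))"

end

theory Submission
  imports Defs
begin

lemma space_borel_of[simp]: "space (borel_of X) = topspace X"
  unfolding borel_of_def by (simp add: space_measure_of_conv)

lemma sets_borel_of: "sets (borel_of X) = sigma_sets (topspace X) {U. openin X U}"
  unfolding borel_of_def by (rule sets_measure_of) (auto dest: openin_subset)

lemma borel_of_open: "openin X U \<Longrightarrow> U \<in> sets (borel_of X)"
  unfolding sets_borel_of by auto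

lemma borel_of_closed: assumes "closedin X C" shows "C \<in> sets (borel_of X)"
proof -
  have "topspace X - C \<in> sets (borel_of X)" using assms by (intro borel_of_open) auto
  then have "topspace X - (topspace X - C) \<in> sets (borel_of X)"
    unfolding sets_borel_of by (rule sigma_sets.Compl)
  moreover have "topspace X - (topspace X - C) = C" using assms closedin_subset by blast
  ultimately show ?thesis by simp
qed

lemma borel_of_euclidean: "borel_of euclidean = borel"
  by (simp add: borel_of_def borel_def)

lemma measurable_borel_of:
  assumes "continuous_map X Y f"
  shows "f \<in> measurable (borel_of X) (borel_of Y)"
  unfolding borel_of_def
proof (rule measurable_measure_of)
  show "{U. openin Y U} \<subseteq> Pow (topspace Y)" by (auto dest: openin_subset)
  show "f \<in> space (sigma (topspace X) {U. openin X U}) \<rightarrow> topspace Y"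
    using assms by (auto simp: space_measure_of_conv continuous_map_def)
  fix V assume "V \<in> {U. openin Y U}"
  then have "openin X {x \<in> topspace X. f x \<in> V}"
    using assms by (auto simp: continuous_map_def)
  moreover have "f -` V \<inter> topspace X = {x \<in> topspace X. f x \<in> V}" by auto
  ultimately show "f -` V \<inter> space (sigma (topspace X) {U. openin X U}) \<in> sets (sigma (topspace X) {U. openin X U})"
    using borel_of_open[unfolded borel_of_def] by (simp add: space_measure_of_conv)
qed

lemma borel_measurable_borel_of:
  assumes "continuous_map X euclideanreal f"
  shows "f \<in> borel_measurable (borel_of X)"
  using measurable_borel_of[OF assms] by (simp add: borel_of_euclidean)

lemma sets_borel_of_subtopology:
  assumes "A \<in> sets (borel_of X)"
  shows "sets (borel_of (subtopology X A)) \<subseteq> sets (borel_of X)"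
proof -
  have AX: "A \<subseteq> topspace X" using sets.sets_into_space[OF assms] by simp
  have "sigma_sets (topspace X \<inter> A) {U. openin (subtopology X A) U} \<subseteq> sets (borel_of X)"
  proof
    fix E assume "E \<in> sigma_sets (topspace X \<inter> A) {U. openin (subtopology X A) U}"
    then show "E \<in> sets (borel_of X)"
    proof induct
      case (Basic a)
      then obtain U where "openin X U" "a = U \<inter> A" by (auto simp: openin_subtopology)
      then show ?case using assms borel_of_open by blast
    next
      case Empty then show ?case by simp
    next
      case (Compl a)
      have "topspace X \<inter> A - a = A - a" using AX by auto
      then show ?case using Compl assms by auto
    next
      case (Union a) then show ?case by auto
    qed
  qed
  then show ?thesis by (simp add: sets_borel_of)
qed

lemma cont_real_criterion:
  assumes "\<And>x e. x \<in> topspace X \<Longrightarrow> e > 0 \<Longrightarrow> \<exists>U. openin X U \<and> x \<in> U \<and> (\<forall>y\<in>U. \<bar>f y - f x\<bar> < e)"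
  shows "continuous_map X euclideanreal f"
  unfolding continuous_map_eq_topcontinuous_at
proof
  fix x assume x: "x \<in> topspace X"
  have "\<exists>U. openin X U \<and> x \<in> U \<and> (\<forall>y\<in>U. f y \<in> V)" if V: "openin euclideanreal V" "f x \<in> V" for V
  proof -
    obtain e where e: "e > 0" "ball (f x) e \<subseteq> V" using V by (metis open_contains_ball_eq open_openin)
    obtain U where U: "openin X U" "x \<in> U" "\<forall>y\<in>U. \<bar>f y - f x\<bar> < e" using assms[OF x e(1)] by blast
    have "f y \<in> V" if "y \<in> U" for y
    proof -
      have "\<bar>f y - f x\<bar> < e" using U that by blast
      then have "f y \<in> ball (f x) e" by (simp add: dist_real_def abs_minus_commute)
      then show ?thesis using e by blast
    qed
    then show ?thesis using U by blast
  qed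
  then show "topcontinuous_at X euclideanreal f x"
    unfolding topcontinuous_at_def using x by (simp add: Pi_iff)
qed

lemma cont_real_nbhd:
  assumes "continuous_map X euclideanreal f" "x \<in> topspace X" "e > 0"
  obtains U where "openin X U" "x \<in> U" "\<And>y. y \<in> U \<Longrightarrow> \<bar>f y - f x\<bar> < e"
proof -
  have "topcontinuous_at X euclideanreal f x"
    using assms(1,2) unfolding continuous_map_eq_topcontinuous_at by (rule bspec)
  then have tc: "\<And>V. openin euclideanreal V \<Longrightarrow> f x \<in> V \<Longrightarrow> (\<exists>U. openin X U \<and> x \<in> U \<and> (\<forall>y \<in> U. f y \<in> V))"
    unfolding topcontinuous_at_def by simp
  have "openin euclideanreal (ball (f x) e)" "f x \<in> ball (f x) e" using assms(3) by auto
  from tc[OF this] obtain U where U: "openin X U" "x \<in> U" "\<forall>y\<in>U. f y \<in> ball (f x) e"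
    by blast
  show ?thesis
  proof (rule that[OF U(1,2)])
    fix y assume "y \<in> U" then have "f y \<in> ball (f x) e" using U by blast
    then show "\<bar>f y - f x\<bar> < e" by (simp add: dist_real_def abs_minus_commute)
  qed
qed

lemma second_countable_prod:
  assumes "second_countable X" "second_countable Y"
  shows "second_countable (prod_topology X Y)"
proof -
  obtain BX where BX: "countable BX" "\<forall>V\<in>BX. openin X V" "\<forall>U x. openin X U \<and> x \<in> U \<longrightarrow> (\<exists>V\<in>BX. x \<in> V \<and> V \<subseteq> U)"
    using assms(1) unfolding second_countable_def by (elim exE conjE) (rule that)
  obtain BY where BY: "countable BY" "\<forall>V\<in>BY. openin Y V" "\<forall>U x. openin Y U \<and> x \<in> U \<longrightarrow> (\<exists>V\<in>BY. x \<in> V \<and> V \<subseteq> U)"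
    using assms(2) unfolding second_countable_def by (elim exE conjE) (rule that)
  define B where "B = (\<lambda>(A, B). A \<times> B) ` (BX \<times> BY)"
  have "countable B" unfolding B_def using BX(1) BY(1) by simp
  moreover have "\<forall>V\<in>B. openin (prod_topology X Y) V"
  proof
    fix V assume "V \<in> B"
    then obtain pr where pr: "pr \<in> BX \<times> BY" "V = (\<lambda>(A, B). A \<times> B) pr" unfolding B_def by (rule imageE)
    obtain A C where "pr = (A, C)" by (cases pr)
    then have "V = A \<times> C" "A \<in> BX" "C \<in> BY" using pr by auto
    then show "openin (prod_topology X Y) V" using BX(2) BY(2) by (simp add: openin_prod_Times_iff)
  qed
  moreover have "\<exists>V\<in>B. z \<in> V \<and> V \<subseteq> W" if "openin (prod_topology X Y) W" "z \<in> W" for W z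
  proof -
    obtain a b where z: "z = (a, b)" by (cases z)
    have "\<exists>U V. openin X U \<and> openin Y V \<and> a \<in> U \<and> b \<in> V \<and> U \<times> V \<subseteq> W"
      using that z unfolding openin_prod_topology_alt by simp
    then obtain U V where UV: "openin X U" "openin Y V" "a \<in> U" "b \<in> V" "U \<times> V \<subseteq> W"
      by (elim exE conjE) (rule that)
    obtain U' where U': "U' \<in> BX" "a \<in> U'" "U' \<subseteq> U" using BX(3) UV(1,3) by blast
    obtain V' where V': "V' \<in> BY" "b \<in> V'" "V' \<subseteq> V" using BY(3) UV(2,4) by blast
    have "(U', V') \<in> BX \<times> BY" using U'(1) V'(1) by simp
    then have "U' \<times> V' \<in> B" unfolding B_def by (rule rev_image_eqI) simp
    moreover have "z \<in> U' \<times> V'" using U' V' z by simp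
    moreover have "U' \<times> V' \<subseteq> W" using U'(3) V'(3) UV(5) by auto
    ultimately show ?thesis by (intro bexI[of _ "U' \<times> V'"] conjI)
  qed
  ultimately show ?thesis unfolding second_countable_def by (intro exI[of _ B]) simp
qed

lemma sets_borel_prod_subset:
  assumes "second_countable X" "second_countable Y"
    and "space M = topspace X" "space N = topspace Y"
    and "sets (borel_of X) \<subseteq> sets M" "sets (borel_of Y) \<subseteq> sets N"
  shows "sets (borel_of (prod_topology X Y)) \<subseteq> sets (M \<Otimes>\<^sub>M N)"
proof -
  obtain BX where BX: "countable BX" "\<forall>V\<in>BX. openin X V" "\<forall>U x. openin X U \<and> x \<in> U \<longrightarrow> (\<exists>V\<in>BX. x \<in> V \<and> V \<subseteq> U)"
    using assms(1) unfolding second_countable_def by (elim exE conjE) (rule that)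
  obtain BY where BY: "countable BY" "\<forall>V\<in>BY. openin Y V" "\<forall>U x. openin Y U \<and> x \<in> U \<longrightarrow> (\<exists>V\<in>BY. x \<in> V \<and> V \<subseteq> U)"
    using assms(2) unfolding second_countable_def by (elim exE conjE) (rule that)
  have opn: "W \<in> sets (M \<Otimes>\<^sub>M N)" if W: "openin (prod_topology X Y) W" for W
  proof -
    define D where "D = {pr \<in> BX \<times> BY. fst pr \<times> snd pr \<subseteq> W}"
    define C where "C = (\<lambda>pr. fst pr \<times> snd pr) ` D"
    have "countable (BX \<times> BY)" using BX(1) BY(1) by simp
    moreover have "D \<subseteq> BX \<times> BY" unfolding D_def by (rule subsetI) simp
    ultimately have "countable D" by (rule countable_subset[rotated])
    then have cC: "countable C" unfolding C_def by simp
    have sub1: "W \<subseteq> \<Union>C"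
    proof
      fix z assume "z \<in> W"
      obtain a b where z: "z = (a, b)" by (cases z)
      have "\<exists>U V. openin X U \<and> openin Y V \<and> a \<in> U \<and> b \<in> V \<and> U \<times> V \<subseteq> W"
        using W \<open>z \<in> W\<close> z unfolding openin_prod_topology_alt by simp
      then obtain U V where UV: "openin X U" "openin Y V" "a \<in> U" "b \<in> V" "U \<times> V \<subseteq> W"
        by (elim exE conjE) (rule that)
      obtain U' where U': "U' \<in> BX" "a \<in> U'" "U' \<subseteq> U" using BX(3) UV(1,3) by blast
      obtain V' where V': "V' \<in> BY" "b \<in> V'" "V' \<subseteq> V" using BY(3) UV(2,4) by blast
      have "U' \<times> V' \<subseteq> W" using U'(3) V'(3) UV(5) by auto
      then have "(U', V') \<in> D" unfolding D_def using U'(1) V'(1) by simp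
      then have "U' \<times> V' \<in> C" unfolding C_def by (rule rev_image_eqI) simp
      moreover have "z \<in> U' \<times> V'" using U' V' z by simp
      ultimately show "z \<in> \<Union>C" by (rule UnionI)
    qed
    moreover have sub2: "\<Union>C \<subseteq> W"
    proof
      fix z assume "z \<in> \<Union>C"
      then obtain c where "c \<in> C" "z \<in> c" by (rule UnionE)
      from \<open>c \<in> C\<close> obtain pr where pr: "pr \<in> D" "c = fst pr \<times> snd pr" unfolding C_def by (rule imageE)
      then have "fst pr \<times> snd pr \<subseteq> W" unfolding D_def by simp
      then show "z \<in> W" using \<open>z \<in> c\<close> pr(2) by blast
    qed
    moreover have "C \<subseteq> sets (M \<Otimes>\<^sub>M N)"
    proof
      fix c assume "c \<in> C"
      then obtain pr where pr: "pr \<in> D" "c = fst pr \<times> snd pr" unfolding C_def by (rule imageE)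
      then have "fst pr \<in> BX" "snd pr \<in> BY" unfolding D_def by auto
      then have "fst pr \<in> sets M" "snd pr \<in> sets N" using BX(2) BY(2) assms(5,6) borel_of_open by blast+
      then show "c \<in> sets (M \<Otimes>\<^sub>M N)" using pr(2) by simp
    qed
    moreover have "W = \<Union>C" using sub1 sub2 by (rule subset_antisym)
    ultimately show ?thesis using sets.countable_Union[OF cC] by simp
  qed
  have "sigma_sets (space M \<times> space N) {U. openin (prod_topology X Y) U} \<subseteq> sets (M \<Otimes>\<^sub>M N)"
  proof -
    have "{U. openin (prod_topology X Y) U} \<subseteq> sets (M \<Otimes>\<^sub>M N)" using opn by (intro subsetI) simp
    then have "sigma_sets (space (M \<Otimes>\<^sub>M N)) {U. openin (prod_topology X Y) U} \<subseteq> sets (M \<Otimes>\<^sub>M N)"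
      by (rule sigma_algebra.sigma_sets_subset[OF sets.sigma_algebra_axioms])
    then show ?thesis unfolding space_pair_measure .
  qed
  then show ?thesis by (simp add: sets_borel_of assms(3,4))
qed

lemma bump:
  assumes lc: "locally_compact_space X" and H: "Hausdorff_space X" and K: "compactin X K"
    and U: "openin X U" and KU: "K \<subseteq> U"
  obtains \<phi> L where "continuous_map X euclideanreal \<phi>" "\<And>x. x \<in> topspace X \<Longrightarrow> 0 \<le> \<phi> x \<and> \<phi> x \<le> 1"
    "\<And>x. x \<in> K \<Longrightarrow> \<phi> x = 1" "compactin X L" "L \<subseteq> U" "\<And>x. x \<in> topspace X - L \<Longrightarrow> \<phi> x = 0"
proof -
  have lcU: "locally_compact_space (subtopology X U)"
    using locally_compact_space_open_subset H lc U by blast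
  have HU: "Hausdorff_space (subtopology X U)" using H by (rule Hausdorff_space_subtopology)
  have KU': "compactin (subtopology X U) K" using K KU by (simp add: compactin_subtopology)
  have "\<exists>V L. openin (subtopology X U) V \<and> compactin (subtopology X U) L \<and> closedin (subtopology X U) L \<and> K \<subseteq> V \<and> V \<subseteq> L"
    using iffD1[OF locally_compact_space_compact_closed_compact[of "subtopology X U"], OF _ lcU] HU KU' by blast
  then obtain V L where VL: "openin (subtopology X U) V" "compactin (subtopology X U) L" "K \<subseteq> V" "V \<subseteq> L"
    by (elim exE conjE) (rule that)
  have V: "openin X V" "V \<subseteq> U" using VL(1) U openin_open_subtopology by blast+
  have L: "compactin X L" "L \<subseteq> U" using VL(2) by (simp_all add: compactin_subtopology)
  have cr: "completely_regular_space X"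
    using locally_compact_regular_imp_completely_regular_space lc H by blast
  have cl: "closedin X (topspace X - V)" using V(1) by blast
  have dj: "disjnt K (topspace X - V)" using VL(3) by (auto simp: disjnt_def)
  obtain f where f: "continuous_map X (subtopology euclidean {0..1::real}) f" "f ` (topspace X - V) \<subseteq> {0}" "f ` K \<subseteq> {1}"
    using Urysohn_completely_regular_compact_closed[OF _ cr K cl dj, of 0 1] by auto
  show ?thesis
  proof (rule that[of f L])
    show "continuous_map X euclideanreal f" using f(1) by (rule continuous_map_into_fulltopology)
    show "0 \<le> f x \<and> f x \<le> 1" if "x \<in> topspace X" for x
      using f(1) that unfolding continuous_map_in_subtopology by auto
    show "f x = 1" if "x \<in> K" for x using f(3) that by blast
    show "f x = 0" if "x \<in> topspace X - L" for x using f(2) that VL(4) by blast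
  qed (use L in auto)
qed

lemma tube:
  assumes F: "continuous_map (prod_topology X Y) euclideanreal F" and K: "compactin X K"
    and y0: "y0 \<in> topspace Y" and e: "e > 0"
  obtains W where "openin Y W" "y0 \<in> W" "\<And>x y. x \<in> K \<Longrightarrow> y \<in> W \<Longrightarrow> \<bar>F (x, y) - F (x, y0)\<bar> < e"
proof -
  have KX: "K \<subseteq> topspace X" using K by (simp add: compactin_subset_topspace)
  have "\<exists>AB. openin X (fst AB) \<and> openin Y (snd AB) \<and> x \<in> fst AB \<and> y0 \<in> snd AB \<and>
          (\<forall>a\<in>fst AB. \<forall>b\<in>snd AB. \<bar>F (a, b) - F (x, y0)\<bar> < e/2)" if x: "x \<in> K" for x
  proof -
    have "(x, y0) \<in> topspace (prod_topology X Y)" using x KX y0 by auto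
    then obtain Ob where Ob: "openin (prod_topology X Y) Ob" "(x, y0) \<in> Ob" "\<And>z. z \<in> Ob \<Longrightarrow> \<bar>F z - F (x, y0)\<bar> < e/2"
      using cont_real_nbhd[OF F] e by (metis half_gt_zero)
    have "\<exists>A B. openin X A \<and> openin Y B \<and> x \<in> A \<and> y0 \<in> B \<and> A \<times> B \<subseteq> Ob"
      using Ob(1,2) unfolding openin_prod_topology_alt by simp
    then obtain A B where AB: "openin X A" "openin Y B" "x \<in> A" "y0 \<in> B" "A \<times> B \<subseteq> Ob"
      by (elim exE conjE) (rule that)
    have "\<forall>a\<in>A. \<forall>b\<in>B. \<bar>F (a, b) - F (x, y0)\<bar> < e/2"
    proof (intro ballI)
      fix a b assume "a \<in> A" "b \<in> B"
      then have "(a, b) \<in> Ob" using AB(5) by auto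
      then show "\<bar>F (a, b) - F (x, y0)\<bar> < e/2" by (rule Ob(3))
    qed
    then show ?thesis using AB by (intro exI[of _ "(A, B)"]) simp
  qed
  then obtain AB where AB: "\<And>x. x \<in> K \<Longrightarrow> openin X (fst (AB x)) \<and> openin Y (snd (AB x)) \<and> x \<in> fst (AB x) \<and> y0 \<in> snd (AB x) \<and>
          (\<forall>a\<in>fst (AB x). \<forall>b\<in>snd (AB x). \<bar>F (a, b) - F (x, y0)\<bar> < e/2)"
    by metis
  define A where "A x = fst (AB x)" for x
  define B where "B x = snd (AB x)" for x
  have cov: "(\<forall>U\<in>A ` K. openin X U) \<and> K \<subseteq> \<Union>(A ` K)"
    using AB unfolding A_def by blast
  then obtain \<F> where \<F>: "finite \<F>" "\<F> \<subseteq> A ` K" "K \<subseteq> \<Union>\<F>"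
    using K unfolding compactin_def by (elim conjE allE impE) blast+
  obtain K0 where K0: "K0 \<subseteq> K" "finite K0" "\<F> = A ` K0"
    using finite_subset_image[OF \<F>(1,2)] by blast
  define W where "W = (\<Inter>x\<in>K0. B x) \<inter> topspace Y"
  show ?thesis
  proof (rule that[of W])
    show "openin Y W" unfolding W_def
      using K0 AB unfolding B_def by (intro openin_INT) blast+
    show "y0 \<in> W" unfolding W_def using K0 AB y0 unfolding B_def by blast
    fix x y assume x: "x \<in> K" and y: "y \<in> W"
    then obtain x1 where x1: "x1 \<in> K0" "x \<in> A x1" using \<F>(3) K0(3) by blast
    have x1K: "x1 \<in> K" using x1 K0 by blast
    have yB: "y \<in> B x1" using y x1 unfolding W_def by blast
    have y0B: "y0 \<in> B x1" using AB[OF x1K] unfolding B_def by blast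
    have "\<forall>a\<in>A x1. \<forall>b\<in>B x1. \<bar>F (a, b) - F (x1, y0)\<bar> < e/2" using AB[OF x1K] unfolding A_def B_def by blast
    then have "\<bar>F (x, y) - F (x1, y0)\<bar> < e/2" "\<bar>F (x, y0) - F (x1, y0)\<bar> < e/2"
      using x1(2) yB y0B by blast+
    then show "\<bar>F (x, y) - F (x, y0)\<bar> < e" by linarith
  qed
qed

lemma cont_section:
  assumes "continuous_map (prod_topology X Y) euclideanreal F" "y \<in> topspace Y"
  shows "continuous_map X euclideanreal (\<lambda>x. F (x, y))"
proof -
  have "continuous_map X (prod_topology X Y) (\<lambda>x. (x, y))"
    unfolding continuous_map_pairwise using assms(2) by (simp add: o_def)
  from continuous_map_compose[OF this assms(1)] show ?thesis by (simp add: o_def)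
qed

lemma emeasure_compact_finite:
  assumes lc: "locally_compact_space X" and H: "Hausdorff_space X"
    and sp: "sets M = sets (borel_of X)" "space M = topspace X"
    and fin: "\<And>f. cc_nonneg X f \<Longrightarrow> (\<integral>\<^sup>+ x. ennreal (f x) \<partial>M) < \<infinity>"
    and K: "compactin X K"
  shows "emeasure M K < \<infinity>"
proof -
  obtain \<phi> L where \<phi>: "continuous_map X euclideanreal \<phi>" "\<And>x. x \<in> topspace X \<Longrightarrow> 0 \<le> \<phi> x \<and> \<phi> x \<le> 1"
    "\<And>x. x \<in> K \<Longrightarrow> \<phi> x = 1" "compactin X L" "L \<subseteq> topspace X" "\<And>x. x \<in> topspace X - L \<Longrightarrow> \<phi> x = 0"
    using bump[OF lc H K openin_topspace] K compactin_subset_topspace by metis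
  have cc: "cc_nonneg X \<phi>" unfolding cc_nonneg_def using \<phi> by blast
  have Ks: "K \<in> sets M" using sp(1) borel_of_closed compactin_imp_closedin[OF H K] by blast
  have "emeasure M K = (\<integral>\<^sup>+ x. indicator K x \<partial>M)" using Ks by simp
  also have "\<dots> \<le> (\<integral>\<^sup>+ x. ennreal (\<phi> x) \<partial>M)"
  proof (rule nn_integral_mono)
    fix x assume "x \<in> space M"
    then show "indicator K x \<le> ennreal (\<phi> x)" using \<phi>(2,3) sp(2) by (auto simp: indicator_def)
  qed
  also have "\<dots> < \<infinity>" using fin[OF cc] .
  finally show ?thesis .
qed

lemma sigma_finite_lc:
  assumes lc: "locally_compact_space X" and H: "Hausdorff_space X" and sc: "second_countable X"
    and sp: "sets M = sets (borel_of X)" "space M = topspace X"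
    and fin: "\<And>f. cc_nonneg X f \<Longrightarrow> (\<integral>\<^sup>+ x. ennreal (f x) \<partial>M) < \<infinity>"
  shows "sigma_finite_measure M"
proof
  obtain BX where BX: "countable BX" "\<forall>V\<in>BX. openin X V" "\<forall>U x. openin X U \<and> x \<in> U \<longrightarrow> (\<exists>V\<in>BX. x \<in> V \<and> V \<subseteq> U)"
    using sc unfolding second_countable_def by (elim exE conjE) (rule that)
  define A where "A = {V \<in> BX. emeasure M V \<noteq> \<infinity>}"
  have "countable A" unfolding A_def using BX(1) by simp
  moreover have "A \<subseteq> sets M" unfolding A_def using BX(2) sp(1) borel_of_open by blast
  moreover have "\<Union>A = space M"
  proof
    show "\<Union>A \<subseteq> space M" unfolding A_def sp(2) using BX(2) openin_subset by blast
    show "space M \<subseteq> \<Union>A"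
    proof
      fix x assume "x \<in> space M"
      then have x: "x \<in> topspace X" using sp(2) by simp
      then have "\<exists>U K. openin X U \<and> compactin X K \<and> x \<in> U \<and> U \<subseteq> K"
        using lc unfolding locally_compact_space_def by blast
      then obtain U C where UC: "openin X U" "compactin X C" "x \<in> U" "U \<subseteq> C"
        by (elim exE conjE) (rule that)
      obtain V where V: "V \<in> BX" "x \<in> V" "V \<subseteq> U" using BX(3) UC(1,3) by blast
      have Cs: "C \<in> sets M" using sp(1) borel_of_closed compactin_imp_closedin[OF H UC(2)] by blast
      have "emeasure M V \<le> emeasure M C" using V(3) UC(4) Cs by (intro emeasure_mono) auto
      also have "\<dots> < \<infinity>" by (rule emeasure_compact_finite[OF lc H sp fin UC(2)])
      finally have "V \<in> A" unfolding A_def using V(1) by simp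
      then show "x \<in> \<Union>A" using V(2) by blast
    qed
  qed
  moreover have "\<forall>a\<in>A. emeasure M a \<noteq> \<infinity>" unfolding A_def by simp
  ultimately show "\<exists>A. countable A \<and> A \<subseteq> sets M \<and> \<Union>A = space M \<and> (\<forall>a\<in>A. emeasure M a \<noteq> \<infinity>)"
    by blast
qed

lemma meas_transfer:
  assumes "sets M = sets N" "f \<in> measurable N K"
  shows "f \<in> measurable M K"
proof -
  have "measurable M K = measurable N K" by (rule measurable_cong_sets) (use assms(1) in simp_all)
  then show ?thesis using assms(2) by simp
qed

lemma cont_param:
  fixes X :: "'a topology" and Y :: "'b topology" and lam :: "'a \<Rightarrow> 'a measure" and F :: "'a \<times> 'b \<Rightarrow> real"
  assumes lc: "locally_compact_space X" and H: "Hausdorff_space X"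
    and sp: "\<And>u. u \<in> U \<Longrightarrow> sets (lam u) = sets (borel_of X) \<and> space (lam u) = topspace X"
    and cs: "\<And>f. cc_nonneg X f \<Longrightarrow> (\<forall>u\<in>U. (\<integral>\<^sup>+ x. ennreal (f x) \<partial>lam u) < \<infinity>) \<and>
               continuous_map (subtopology X U) euclidean (\<lambda>u. enn2real (\<integral>\<^sup>+ x. ennreal (f x) \<partial>lam u))"
    and Fc: "continuous_map (prod_topology X Y) euclideanreal F"
    and Fnn: "\<And>x y. x \<in> topspace X \<Longrightarrow> y \<in> topspace Y \<Longrightarrow> 0 \<le> F (x, y)"
    and K: "compactin X K" and Fz: "\<And>x y. x \<in> topspace X - K \<Longrightarrow> y \<in> topspace Y \<Longrightarrow> F (x, y) = 0"
  shows "continuous_map (prod_topology (subtopology X U) Y) euclideanreal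
            (\<lambda>(u, y). enn2real (\<integral>\<^sup>+ x. ennreal (F (x, y)) \<partial>lam u))" (is ?A)
    and "\<And>u y. u \<in> U \<Longrightarrow> y \<in> topspace Y \<Longrightarrow> (\<integral>\<^sup>+ x. ennreal (F (x, y)) \<partial>lam u) < \<infinity>" (is "\<And>u y. _ \<Longrightarrow> _ \<Longrightarrow> ?B u y")
proof -
  define I where "I u y = (\<integral>\<^sup>+ x. ennreal (F (x, y)) \<partial>lam u)" for u y
  define Ir where "Ir u y = enn2real (I u y)" for u y
  have ccF: "cc_nonneg X (\<lambda>x. F (x, y))" if y: "y \<in> topspace Y" for y
    unfolding cc_nonneg_def using cont_section[OF Fc y] Fnn[OF _ y] Fz[OF _ y] K by blast
  have finI: "I u y < \<infinity>" if "u \<in> U" "y \<in> topspace Y" for u y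
  proof -
    have "cc_nonneg X (\<lambda>x. F (x, y))" by (rule ccF[OF that(2)])
    from bspec[OF conjunct1[OF cs[OF this]] that(1)] show ?thesis by (simp add: I_def)
  qed
  then show "\<And>u y. u \<in> U \<Longrightarrow> y \<in> topspace Y \<Longrightarrow> ?B u y" unfolding I_def .
  have contI: "continuous_map (subtopology X U) euclideanreal (\<lambda>u. Ir u y)" if "y \<in> topspace Y" for y
  proof -
    have "cc_nonneg X (\<lambda>x. F (x, y))" by (rule ccF[OF that])
    from conjunct2[OF cs[OF this]] show ?thesis by (simp add: Ir_def I_def)
  qed
  have measF: "(\<lambda>x. F (x, y)) \<in> borel_measurable (lam u)" if "u \<in> U" "y \<in> topspace Y" for u y
    using meas_transfer[OF conjunct1[OF sp[OF that(1)]] borel_measurable_borel_of[OF cont_section[OF Fc that(2)]]] .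
  obtain \<phi> L where \<phi>: "continuous_map X euclideanreal \<phi>" "\<And>x. x \<in> topspace X \<Longrightarrow> 0 \<le> \<phi> x \<and> \<phi> x \<le> 1"
    "\<And>x. x \<in> K \<Longrightarrow> \<phi> x = 1" "compactin X L" "L \<subseteq> topspace X" "\<And>x. x \<in> topspace X - L \<Longrightarrow> \<phi> x = 0"
    using bump[OF lc H K openin_topspace] K compactin_subset_topspace by metis
  have cc\<phi>: "cc_nonneg X \<phi>" unfolding cc_nonneg_def using \<phi> by blast
  define Phi where "Phi u = (\<integral>\<^sup>+ x. ennreal (\<phi> x) \<partial>lam u)" for u
  define Phir where "Phir u = enn2real (Phi u)" for u
  have finPhi: "Phi u < \<infinity>" if "u \<in> U" for u using bspec[OF conjunct1[OF cs[OF cc\<phi>]] that] unfolding Phi_def .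
  have contPhi: "continuous_map (subtopology X U) euclideanreal Phir"
    using conjunct2[OF cs[OF cc\<phi>]] unfolding Phir_def Phi_def .
  have meas\<phi>: "\<phi> \<in> borel_measurable (lam u)" if "u \<in> U" for u
    using meas_transfer[OF conjunct1[OF sp[OF that]] borel_measurable_borel_of[OF \<phi>(1)]] .
  have Phir_nn: "0 \<le> Phir u" for u unfolding Phir_def by simp
  have est: "Ir u y \<le> Ir u y' + \<epsilon> * Phir u"
    if u: "u \<in> U" and y: "y \<in> topspace Y" and y': "y' \<in> topspace Y" and eps: "\<epsilon> > 0"
      and pt: "\<And>x. x \<in> K \<Longrightarrow> \<bar>F (x, y) - F (x, y')\<bar> < \<epsilon>" for u y y' \<epsilon>
  proof -
    have "I u y \<le> (\<integral>\<^sup>+ x. ennreal (F (x, y')) + ennreal \<epsilon> * ennreal (\<phi> x) \<partial>lam u)"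
      unfolding I_def
    proof (rule nn_integral_mono)
      fix x assume "x \<in> space (lam u)"
      then have x: "x \<in> topspace X" using sp[OF u] by simp
      have "F (x, y) \<le> F (x, y') + \<epsilon> * \<phi> x"
      proof (cases "x \<in> K")
        case True then show ?thesis using pt[OF True] \<phi>(3)[OF True] by simp
      next
        case False then show ?thesis using Fz[of x y] Fz[of x y'] x y y' \<phi>(2)[OF x] eps by simp
      qed
      then have "ennreal (F (x, y)) \<le> ennreal (F (x, y') + \<epsilon> * \<phi> x)" by (rule ennreal_leI)
      also have "\<dots> = ennreal (F (x, y')) + ennreal \<epsilon> * ennreal (\<phi> x)"
        using Fnn[OF x y'] \<phi>(2)[OF x] eps by (simp add: ennreal_plus ennreal_mult)
      finally show "ennreal (F (x, y)) \<le> ennreal (F (x, y')) + ennreal \<epsilon> * ennreal (\<phi> x)" .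
    qed
    also have "\<dots> = I u y' + ennreal \<epsilon> * Phi u"
      unfolding I_def Phi_def using measF[OF u y'] meas\<phi>[OF u]
      by (simp add: nn_integral_add nn_integral_cmult)
    also have "\<dots> = ennreal (Ir u y' + \<epsilon> * Phir u)"
      using finI[OF u y'] finPhi[OF u] eps Phir_nn[of u] unfolding Ir_def Phir_def
      by (simp add: ennreal_plus ennreal_mult ennreal_enn2real less_top[symmetric])
    finally have "I u y \<le> ennreal (Ir u y' + \<epsilon> * Phir u)" .
    then show ?thesis unfolding Ir_def
      using eps Phir_nn[of u] by (simp add: enn2real_leI)
  qed
  show ?A
  proof (rule cont_real_criterion)
    fix z e assume z: "z \<in> topspace (prod_topology (subtopology X U) Y)" and e: "(e::real) > 0"
    obtain u0 y0 where z0: "z = (u0, y0)" by (cases z)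
    have u0: "u0 \<in> topspace (subtopology X U)" and y0: "y0 \<in> topspace Y" using z z0 by auto
    obtain N1 where N1: "openin (subtopology X U) N1" "u0 \<in> N1" "\<And>u. u \<in> N1 \<Longrightarrow> \<bar>Phir u - Phir u0\<bar> < 1"
      using cont_real_nbhd[OF contPhi u0, of 1] by auto
    obtain N2 where N2: "openin (subtopology X U) N2" "u0 \<in> N2" "\<And>u. u \<in> N2 \<Longrightarrow> \<bar>Ir u y0 - Ir u0 y0\<bar> < e/2"
      using cont_real_nbhd[OF contI[OF y0] u0, of "e/2"] e by auto
    define \<epsilon> where "\<epsilon> = e / (2 * (Phir u0 + 1))"
    have eps: "\<epsilon> > 0" unfolding \<epsilon>_def using e Phir_nn[of u0] by simp
    obtain W where W: "openin Y W" "y0 \<in> W" "\<And>x y. x \<in> K \<Longrightarrow> y \<in> W \<Longrightarrow> \<bar>F (x, y) - F (x, y0)\<bar> < \<epsilon>"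
      using tube[OF Fc K y0 eps] by blast
    define N where "N = (N1 \<inter> N2) \<times> W"
    show "\<exists>N. openin (prod_topology (subtopology X U) Y) N \<and> z \<in> N \<and>
           (\<forall>w\<in>N. \<bar>(\<lambda>(u, y). enn2real (\<integral>\<^sup>+ x. ennreal (F (x, y)) \<partial>lam u)) w -
                   (\<lambda>(u, y). enn2real (\<integral>\<^sup>+ x. ennreal (F (x, y)) \<partial>lam u)) z\<bar> < e)"
    proof (intro exI[of _ N] conjI ballI)
      show "openin (prod_topology (subtopology X U) Y) N"
        unfolding N_def using N1(1) N2(1) W(1) by (simp add: openin_prod_Times_iff openin_Int)
      show "z \<in> N" unfolding N_def z0 using N1(2) N2(2) W(2) by simp
      fix w assume "w \<in> N"
      then obtain u y where w: "w = (u, y)" "u \<in> N1" "u \<in> N2" "y \<in> W" unfolding N_def by auto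
      have uU: "u \<in> U" using openin_subset[OF N1(1)] w(2) by auto
      have yY: "y \<in> topspace Y" using openin_subset[OF W(1)] w(4) by auto
      have p1: "\<And>x. x \<in> K \<Longrightarrow> \<bar>F (x, y) - F (x, y0)\<bar> < \<epsilon>" using W(3) w(4) by blast
      have p2: "\<And>x. x \<in> K \<Longrightarrow> \<bar>F (x, y0) - F (x, y)\<bar> < \<epsilon>" using p1 by (simp add: abs_minus_commute)
      have a1: "Ir u y \<le> Ir u y0 + \<epsilon> * Phir u" by (rule est[OF uU yY y0 eps p1])
      have a2: "Ir u y0 \<le> Ir u y + \<epsilon> * Phir u" by (rule est[OF uU y0 yY eps p2])
      have "Phir u < Phir u0 + 1" using N1(3)[OF w(2)] by simp
      then have "\<epsilon> * Phir u < \<epsilon> * (Phir u0 + 1)" using eps by simp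
      also have "\<epsilon> * (Phir u0 + 1) = e / 2"
      proof -
        have "Phir u0 + 1 > 0" using Phir_nn[of u0] by simp
        then show ?thesis unfolding \<epsilon>_def by (simp add: field_simps)
      qed
      finally have b: "\<epsilon> * Phir u < e / 2" .
      have c: "\<bar>Ir u y0 - Ir u0 y0\<bar> < e/2" using N2(3)[OF w(3)] .
      have "\<bar>Ir u y - Ir u0 y0\<bar> < e" using a1 a2 b c by linarith
      then show "\<bar>(\<lambda>(u, y). enn2real (\<integral>\<^sup>+ x. ennreal (F (x, y)) \<partial>lam u)) w -
                   (\<lambda>(u, y). enn2real (\<integral>\<^sup>+ x. ennreal (F (x, y)) \<partial>lam u)) z\<bar> < e"
        unfolding w(1) z0 Ir_def I_def by simp
    qed
  qed
qed

lemma measurable_sets_mono: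
  assumes "sets M \<subseteq> sets M'" "space M = space M'" "f \<in> measurable M N"
  shows "f \<in> measurable M' N"
  using assms unfolding measurable_def by auto

lemma fubini3:
  assumes sf: "sigma_finite_measure M3" and x: "x \<in> space M2"
    and f: "f \<in> borel_measurable (M1 \<Otimes>\<^sub>M (return M2 x \<Otimes>\<^sub>M M3))"
  shows "(\<integral>\<^sup>+ z. f z \<partial>(M1 \<Otimes>\<^sub>M (return M2 x \<Otimes>\<^sub>M M3))) = (\<integral>\<^sup>+ a. \<integral>\<^sup>+ c. f (a, x, c) \<partial>M3 \<partial>M1)"
proof -
  interpret R: prob_space "return M2 x" by (rule prob_space_return[OF x])
  have sf23: "sigma_finite_measure (return M2 x \<Otimes>\<^sub>M M3)"
    by (rule sigma_finite_pair_measure[OF R.sigma_finite_measure_axioms sf])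
  have "(\<integral>\<^sup>+ z. f z \<partial>(M1 \<Otimes>\<^sub>M (return M2 x \<Otimes>\<^sub>M M3))) = (\<integral>\<^sup>+ a. \<integral>\<^sup>+ y. f (a, y) \<partial>(return M2 x \<Otimes>\<^sub>M M3) \<partial>M1)"
    using sigma_finite_measure.nn_integral_fst[OF sf23 f] by simp
  also have "\<dots> = (\<integral>\<^sup>+ a. \<integral>\<^sup>+ c. f (a, x, c) \<partial>M3 \<partial>M1)"
  proof (rule nn_integral_cong)
    fix a assume a: "a \<in> space M1"
    have fa: "(\<lambda>y. f (a, y)) \<in> borel_measurable (return M2 x \<Otimes>\<^sub>M M3)"
      using measurable_Pair2[OF f a] .
    have "(\<integral>\<^sup>+ y. f (a, y) \<partial>(return M2 x \<Otimes>\<^sub>M M3)) = (\<integral>\<^sup>+ b. \<integral>\<^sup>+ c. f (a, b, c) \<partial>M3 \<partial>return M2 x)"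
      using sigma_finite_measure.nn_integral_fst[OF sf fa] by simp
    also have "\<dots> = (\<integral>\<^sup>+ c. f (a, x, c) \<partial>M3)"
    proof (rule nn_integral_return[OF x])
      have "(\<lambda>b. \<integral>\<^sup>+ c. f (a, b, c) \<partial>M3) \<in> borel_measurable (return M2 x)"
        using sigma_finite_measure.borel_measurable_nn_integral_fst[OF sf fa] by simp
      then show "(\<lambda>b. \<integral>\<^sup>+ c. f (a, b, c) \<partial>M3) \<in> borel_measurable M2"
        by (rule meas_transfer[rotated]) simp
    qed
    finally show "(\<integral>\<^sup>+ y. f (a, y) \<partial>(return M2 x \<Otimes>\<^sub>M M3)) = (\<integral>\<^sup>+ c. f (a, x, c) \<partial>M3)" .
  qed
  finally show ?thesis .
qed

context fixes G :: "('a, 'b) tgroupoid_scheme" assumes gpd: "groupoid G"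
begin

lemma gpd_units_arr: "u \<in> gunits G \<Longrightarrow> u \<in> garr G"
  using gpd unfolding groupoid_def by (elim conjE) blast

lemma gpd_units_rd: "u \<in> gunits G \<Longrightarrow> gr G u = u \<and> gd G u = u"
  using gpd unfolding groupoid_def by (elim conjE) blast

lemma gpd_rd_units: "x \<in> garr G \<Longrightarrow> gr G x \<in> gunits G \<and> gd G x \<in> gunits G"
  using gpd unfolding groupoid_def by (elim conjE) blast

lemma gpd_mul: "x \<in> garr G \<Longrightarrow> y \<in> garr G \<Longrightarrow> gd G x = gr G y \<Longrightarrow>
    gmul G x y \<in> garr G \<and> gr G (gmul G x y) = gr G x \<and> gd G (gmul G x y) = gd G y"
proof -
  assume a: "x \<in> garr G" "y \<in> garr G" "gd G x = gr G y"
  have "\<forall>(x, y)\<in>composable G. gmul G x y \<in> garr G \<and> gr G (gmul G x y) = gr G x \<and> gd G (gmul G x y) = gd G y"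
    using gpd unfolding groupoid_def by (elim conjE)
  moreover have "(x, y) \<in> composable G" using a unfolding composable_def by simp
  ultimately have "case (x, y) of (x, y) \<Rightarrow> gmul G x y \<in> garr G \<and> gr G (gmul G x y) = gr G x \<and> gd G (gmul G x y) = gd G y" by (rule bspec)
  then show ?thesis by simp
qed

lemma gpd_assoc: "x \<in> garr G \<Longrightarrow> y \<in> garr G \<Longrightarrow> z \<in> garr G \<Longrightarrow> gd G x = gr G y \<Longrightarrow> gd G y = gr G z \<Longrightarrow>
    gmul G (gmul G x y) z = gmul G x (gmul G y z)"
  using gpd unfolding groupoid_def by (elim conjE) blast

lemma gpd_unit_mul: "x \<in> garr G \<Longrightarrow> gmul G (gr G x) x = x \<and> gmul G x (gd G x) = x"
  using gpd unfolding groupoid_def by (elim conjE) blast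

lemma gpd_inv: "x \<in> garr G \<Longrightarrow> ginv G x \<in> garr G \<and> gr G (ginv G x) = gd G x \<and> gd G (ginv G x) = gr G x \<and>
         gmul G x (ginv G x) = gr G x \<and> gmul G (ginv G x) x = gd G x"
  using gpd unfolding groupoid_def by (elim conjE) blast

lemma gpd_inv_mul_cancel: "x \<in> garr G \<Longrightarrow> y \<in> garr G \<Longrightarrow> gr G y = gd G x \<Longrightarrow> gmul G (ginv G x) (gmul G x y) = y"
proof -
  assume a: "x \<in> garr G" "y \<in> garr G" "gr G y = gd G x"
  note i = gpd_inv[OF a(1)]
  have "gmul G (ginv G x) (gmul G x y) = gmul G (gmul G (ginv G x) x) y"
    using gpd_assoc[of "ginv G x" x y] i a by simp
  also have "\<dots> = gmul G (gr G y) y" using i a by simp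
  also have "\<dots> = y" using gpd_unit_mul[OF a(2)] by simp
  finally show ?thesis .
qed

lemma gpd_mul_inv_cancel: "x \<in> garr G \<Longrightarrow> y \<in> garr G \<Longrightarrow> gr G y = gr G x \<Longrightarrow> gmul G x (gmul G (ginv G x) y) = y"
proof -
  assume a: "x \<in> garr G" "y \<in> garr G" "gr G y = gr G x"
  note i = gpd_inv[OF a(1)]
  have "gmul G x (gmul G (ginv G x) y) = gmul G (gmul G x (ginv G x)) y"
    using gpd_assoc[of x "ginv G x" y] i a by simp
  also have "\<dots> = gmul G (gr G y) y" using i a by simp
  also have "\<dots> = y" using gpd_unit_mul[OF a(2)] by simp
  finally show ?thesis .
qed

lemma gpd_idem_unit: "x \<in> garr G \<Longrightarrow> gd G x = gr G x \<Longrightarrow> gmul G x x = x \<Longrightarrow> gr G x = x"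
proof -
  assume a: "x \<in> garr G" "gd G x = gr G x" "gmul G x x = x"
  note i = gpd_inv[OF a(1)]
  have "gr G x = gmul G x (ginv G x)" using i by simp
  also have "\<dots> = gmul G (gmul G x x) (ginv G x)" using a by simp
  also have "\<dots> = gmul G x (gmul G x (ginv G x))" using gpd_assoc[of x x "ginv G x"] a i by simp
  also have "\<dots> = gmul G x (gd G x)" using i a by simp
  also have "\<dots> = x" using gpd_unit_mul[OF a(1)] by simp
  finally show ?thesis .
qed

end

context fixes S :: "('a, 'b) tgroupoid_scheme" and G :: "('c, 'd) tgroupoid_scheme" and p
  assumes gS: "groupoid S" and gG: "groupoid G" and hp: "groupoid_hom S G p"
begin

lemma hom_arr: "x \<in> garr S \<Longrightarrow> p x \<in> garr G"
  using hp unfolding groupoid_hom_def by blast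

lemma hom_mul: "x \<in> garr S \<Longrightarrow> y \<in> garr S \<Longrightarrow> gd S x = gr S y \<Longrightarrow>
   gmul G (p x) (p y) = p (gmul S x y) \<and> gd G (p x) = gr G (p y)"
proof -
  assume a: "x \<in> garr S" "y \<in> garr S" "gd S x = gr S y"
  have "\<forall>(x, y)\<in>composable S. gmul G (p x) (p y) = p (gmul S x y) \<and> gd G (p x) = gr G (p y)"
    using hp unfolding groupoid_hom_def by (elim conjE)
  moreover have "(x, y) \<in> composable S" using a unfolding composable_def by simp
  ultimately have "case (x, y) of (x, y) \<Rightarrow> gmul G (p x) (p y) = p (gmul S x y) \<and> gd G (p x) = gr G (p y)" by (rule bspec)
  then show ?thesis by simp
qed

lemma hom_unit: "u \<in> gunits S \<Longrightarrow> gr G (p u) = p u \<and> gd G (p u) = p u"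
proof -
  assume u: "u \<in> gunits S"
  have ua: "u \<in> garr S" and urd: "gr S u = u" "gd S u = u"
    using gpd_units_arr[OF gS u] gpd_units_rd[OF gS u] by auto
  have uu: "gmul S u u = u" using gpd_unit_mul[OF gS ua] urd by simp
  have m: "gmul G (p u) (p u) = p u" "gd G (p u) = gr G (p u)"
    using hom_mul[OF ua ua] urd uu by simp_all
  have "gr G (p u) = p u" using gpd_idem_unit[OF gG hom_arr[OF ua] m(2) m(1)] .
  then show ?thesis using m(2) by simp
qed

lemma hom_rd: "x \<in> garr S \<Longrightarrow> p (gr S x) = gr G (p x) \<and> p (gd S x) = gd G (p x)"
proof -
  assume x: "x \<in> garr S"
  have ru: "gr S x \<in> gunits S" and du: "gd S x \<in> gunits S" using gpd_rd_units[OF gS x] by auto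
  have ra: "gr S x \<in> garr S" and da: "gd S x \<in> garr S" using gpd_units_arr[OF gS] ru du by auto
  have "gd G (p (gr S x)) = gr G (p x)"
    using hom_mul[OF ra x] gpd_units_rd[OF gS ru] by simp
  moreover have "gd G (p x) = gr G (p (gd S x))"
    using hom_mul[OF x da] gpd_units_rd[OF gS du] by simp
  ultimately show ?thesis using hom_unit[OF ru] hom_unit[OF du] by simp
qed

end

locale pbk =
  fixes S :: "('s, 'x) tgroupoid_scheme" and G :: "('g, 'y) tgroupoid_scheme" and T :: "('t, 'z) tgroupoid_scheme"
    and lamS :: "'s \<Rightarrow> 's measure" and lamT :: "'t \<Rightarrow> 't measure" and p :: "'s \<Rightarrow> 'g" and q :: "'t \<Rightarrow> 'g"
  assumes lS: "lcsc_groupoid S" and lG: "lcsc_groupoid G" and lT: "lcsc_groupoid T"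
    and hS: "cont_left_haar_system S lamS" and hT: "cont_left_haar_system T lamT"
    and cp: "continuous_map (gtop S) (gtop G) p" and hp: "groupoid_hom S G p"
    and cq: "continuous_map (gtop T) (gtop G) q" and hq: "groupoid_hom T G q"
begin

abbreviation "Z \<equiv> prod_topology (gtop S) (prod_topology (gtop G) (gtop T))"
abbreviation "W \<equiv> wp_set S G T p q"
abbreviation "P \<equiv> weak_pullback S G T p q"
abbreviation "lamP \<equiv> pullback_system S G T p q lamS lamT"
definition "N s g t = lamS s \<Otimes>\<^sub>M (return (borel_of (gtop G)) g \<Otimes>\<^sub>M lamT t)"

lemma gS: "groupoid S" and gG: "groupoid G" and gT: "groupoid T"
  using lS lG lT unfolding lcsc_groupoid_def topological_groupoid_def by blast+

lemma tS: "topological_groupoid S" and tG: "topological_groupoid G" and tT: "topological_groupoid T"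
  using lS lG lT unfolding lcsc_groupoid_def by blast+

lemma scS: "second_countable (gtop S)" and scG: "second_countable (gtop G)" and scT: "second_countable (gtop T)"
  using lS lG lT unfolding lcsc_groupoid_def by blast+

lemma lcS: "locally_compact_space (gtop S)" and lcG: "locally_compact_space (gtop G)" and lcT: "locally_compact_space (gtop T)"
  using lS lG lT unfolding lcsc_groupoid_def by blast+

lemma HS: "Hausdorff_space (gtop S)" and HG: "Hausdorff_space (gtop G)" and HT: "Hausdorff_space (gtop T)"
  using lS lG lT unfolding lcsc_groupoid_def by blast+

lemma crS: "continuous_map (gtop S) (gtop S) (gr S)" and crG: "continuous_map (gtop G) (gtop G) (gr G)"
  and crT: "continuous_map (gtop T) (gtop T) (gr T)"
  using tS tG tT unfolding topological_groupoid_def by blast+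

lemma cdG: "continuous_map (gtop G) (gtop G) (gd G)"
  using tG unfolding topological_groupoid_def by blast

lemma ciS: "continuous_map (gtop S) (gtop S) (ginv S)" and ciT: "continuous_map (gtop T) (gtop T) (ginv T)"
  using tS tT unfolding topological_groupoid_def by blast+

lemma cmS: "continuous_map (subtopology (prod_topology (gtop S) (gtop S)) (composable S)) (gtop S) (\<lambda>(x, y). gmul S x y)"
  and cmT: "continuous_map (subtopology (prod_topology (gtop T) (gtop T)) (composable T)) (gtop T) (\<lambda>(x, y). gmul T x y)"
  using tS tT unfolding topological_groupoid_def by blast+

lemma sysS: "system_of_measures S lamS" and contS: "continuous_system S lamS"
  and liS: "left_invariant S lamS" and posS: "positive_on_open S lamS"
  using hS unfolding cont_left_haar_system_def by blast+

lemma sysT: "system_of_measures T lamT" and contT: "continuous_system T lamT"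
  and liT: "left_invariant T lamT" and posT: "positive_on_open T lamT"
  using hT unfolding cont_left_haar_system_def by blast+

lemma spS: "s \<in> gunits S \<Longrightarrow> sets (lamS s) = sets (borel_of (gtop S)) \<and> space (lamS s) = garr S"
  using sysS unfolding system_of_measures_def by blast

lemma spT: "t \<in> gunits T \<Longrightarrow> sets (lamT t) = sets (borel_of (gtop T)) \<and> space (lamT t) = garr T"
  using sysT unfolding system_of_measures_def by blast

lemma nullS: "s \<in> gunits S \<Longrightarrow> emeasure (lamS s) (garr S - rfib S s) = 0"
  using sysS unfolding system_of_measures_def by blast

lemma nullT: "t \<in> gunits T \<Longrightarrow> emeasure (lamT t) (garr T - rfib T t) = 0"
  using sysT unfolding system_of_measures_def by blast

lemma csS: "cc_nonneg (gtop S) f \<Longrightarrow> (\<forall>u\<in>gunits S. (\<integral>\<^sup>+ x. ennreal (f x) \<partial>lamS u) < \<infinity>) \<and>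
        continuous_map (subtopology (gtop S) (gunits S)) euclidean (\<lambda>u. enn2real (\<integral>\<^sup>+ x. ennreal (f x) \<partial>lamS u))"
  using contS unfolding continuous_system_def by blast

lemma csT: "cc_nonneg (gtop T) f \<Longrightarrow> (\<forall>u\<in>gunits T. (\<integral>\<^sup>+ x. ennreal (f x) \<partial>lamT u) < \<infinity>) \<and>
        continuous_map (subtopology (gtop T) (gunits T)) euclidean (\<lambda>u. enn2real (\<integral>\<^sup>+ x. ennreal (f x) \<partial>lamT u))"
  using contT unfolding continuous_system_def by blast

lemma sfS: "s \<in> gunits S \<Longrightarrow> sigma_finite_measure (lamS s)"
  using sigma_finite_lc[OF lcS HS scS] spS csS by blast

lemma sfT: "t \<in> gunits T \<Longrightarrow> sigma_finite_measure (lamT t)"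
  using sigma_finite_lc[OF lcT HT scT] spT csT by blast

lemma topspace_Z: "topspace Z = garr S \<times> (garr G \<times> garr T)"
  by simp

lemma W_sub: "W \<subseteq> topspace Z"
  unfolding wp_set_def by auto

lemma gtop_P: "gtop P = subtopology Z W"
  unfolding weak_pullback_def by simp

lemma garr_P: "garr P = W"
  unfolding gtop_P using W_sub by (rule topspace_subtopology_subset)

lemma gunits_P: "gunits P = {(s, g, t). s \<in> gunits S \<and> t \<in> gunits T \<and> g \<in> garr G \<and> gr G g = p s \<and> gd G g = q t}"
  unfolding weak_pullback_def by simp

lemma gr_P: "gr P (s, g, t) = (gr S s, g, gr T t)"
  unfolding weak_pullback_def by simp

lemma gd_P: "gd P (s, g, t) = (gd S s, gmul G (gmul G (ginv G (p s)) g) (q t), gd T t)"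
  unfolding weak_pullback_def by simp

lemma gmul_P: "gmul P (s, g, t) (\<sigma>, h, \<tau>) = (gmul S s \<sigma>, g, gmul T t \<tau>)"
  unfolding weak_pullback_def by simp

lemma W_iff: "(s, g, t) \<in> W \<longleftrightarrow> s \<in> garr S \<and> g \<in> garr G \<and> t \<in> garr T \<and> gr G g = gr G (p s) \<and> gd G g = gr G (q t)"
  unfolding wp_set_def by simp

lemma cZ1: "continuous_map Z (gtop S) fst"
  by (rule continuous_map_fst)

lemma cZ2: "continuous_map Z (gtop G) (\<lambda>z. fst (snd z))"
  using continuous_map_compose[OF continuous_map_snd continuous_map_fst] by (simp add: o_def)

lemma cZ3: "continuous_map Z (gtop T) (\<lambda>z. snd (snd z))"
  using continuous_map_compose[OF continuous_map_snd continuous_map_snd] by (simp add: o_def)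

lemma closed_W: "closedin Z W"
proof -
  have c1: "continuous_map Z (gtop G) (\<lambda>z. gr G (fst (snd z)))"
    using continuous_map_compose[OF cZ2 crG] by (simp add: o_def)
  have c2: "continuous_map Z (gtop G) (\<lambda>z. gr G (p (fst z)))"
    using continuous_map_compose[OF continuous_map_compose[OF cZ1 cp] crG] by (simp add: o_def)
  have c3: "continuous_map Z (gtop G) (\<lambda>z. gd G (fst (snd z)))"
    using continuous_map_compose[OF cZ2 cdG] by (simp add: o_def)
  have c4: "continuous_map Z (gtop G) (\<lambda>z. gr G (q (snd (snd z))))"
    using continuous_map_compose[OF continuous_map_compose[OF cZ3 cq] crG] by (simp add: o_def)
  have "W = {z \<in> topspace Z. gr G (fst (snd z)) = gr G (p (fst z))} \<inter> {z \<in> topspace Z. gd G (fst (snd z)) = gr G (q (snd (snd z)))}"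
    unfolding wp_set_def by auto
  moreover have "closedin Z {z \<in> topspace Z. gr G (fst (snd z)) = gr G (p (fst z))}"
    by (rule closedin_continuous_maps_eq[OF HG c1 c2])
  moreover have "closedin Z {z \<in> topspace Z. gd G (fst (snd z)) = gr G (q (snd (snd z)))}"
    by (rule closedin_continuous_maps_eq[OF HG c3 c4])
  ultimately show ?thesis by (simp add: closedin_Int)
qed

lemma lcZ: "locally_compact_space Z"
  using lcS lcG lcT by (simp add: locally_compact_space_prod_topology)

lemma HZ: "Hausdorff_space Z"
  using HS HG HT by (simp add: Hausdorff_space_prod_topology)

lemma scZ: "second_countable Z"
  using scS scG scT by (simp add: second_countable_prod)

lemma space_N: "s \<in> gunits S \<Longrightarrow> g \<in> garr G \<Longrightarrow> t \<in> gunits T \<Longrightarrow> space (N s g t) = topspace Z"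
  unfolding N_def using spS spT by (simp add: space_pair_measure)

lemma sets_Z_N: assumes "s \<in> gunits S" "g \<in> garr G" "t \<in> gunits T"
  shows "sets (borel_of Z) \<subseteq> sets (N s g t)"
  unfolding N_def
proof (rule sets_borel_prod_subset[OF scS second_countable_prod[OF scG scT]])
  show "space (lamS s) = garr S" "sets (borel_of (gtop S)) \<subseteq> sets (lamS s)" using spS[OF assms(1)] by simp_all
  show "space (return (borel_of (gtop G)) g \<Otimes>\<^sub>M lamT t) = topspace (prod_topology (gtop G) (gtop T))"
    using spT[OF assms(3)] by (simp add: space_pair_measure)
  show "sets (borel_of (prod_topology (gtop G) (gtop T))) \<subseteq> sets (return (borel_of (gtop G)) g \<Otimes>\<^sub>M lamT t)"
    by (rule sets_borel_prod_subset[OF scG scT]) (use spT[OF assms(3)] in simp_all)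
qed

lemma W_sets_Z: "W \<in> sets (borel_of Z)"
  using closed_W by (rule borel_of_closed)

lemma sets_P_Z: "sets (borel_of (gtop P)) \<subseteq> sets (borel_of Z)"
  unfolding gtop_P using W_sets_Z by (rule sets_borel_of_subtopology)

lemma sets_P_N: "s \<in> gunits S \<Longrightarrow> g \<in> garr G \<Longrightarrow> t \<in> gunits T \<Longrightarrow> sets (borel_of (gtop P)) \<subseteq> sets (N s g t)"
  using sets_P_Z sets_Z_N by blast

end

context pbk begin

lemma p_unit: "u \<in> gunits S \<Longrightarrow> gr G (p u) = p u \<and> gd G (p u) = p u"
  using hom_unit[OF gS gG hp] .
lemma q_unit: "u \<in> gunits T \<Longrightarrow> gr G (q u) = q u \<and> gd G (q u) = q u"
  using hom_unit[OF gT gG hq] .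
lemma p_rd: "x \<in> garr S \<Longrightarrow> p (gr S x) = gr G (p x) \<and> p (gd S x) = gd G (p x)"
  using hom_rd[OF gS gG hp] .
lemma q_rd: "x \<in> garr T \<Longrightarrow> q (gr T x) = gr G (q x) \<and> q (gd T x) = gd G (q x)"
  using hom_rd[OF gT gG hq] .
lemma p_arr: "x \<in> garr S \<Longrightarrow> p x \<in> garr G"
  using hom_arr[OF gS gG hp] .
lemma q_arr: "x \<in> garr T \<Longrightarrow> q x \<in> garr G"
  using hom_arr[OF gT gG hq] .

lemma unitsP_W: "u \<in> gunits P \<Longrightarrow> u \<in> W"
proof -
  assume "u \<in> gunits P"
  then obtain s g t where u: "u = (s, g, t)" "s \<in> gunits S" "t \<in> gunits T" "g \<in> garr G" "gr G g = p s" "gd G g = q t"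
    unfolding gunits_P by auto
  show ?thesis unfolding u(1) W_iff
    using u gpd_units_arr[OF gS u(2)] gpd_units_arr[OF gT u(3)] p_unit[OF u(2)] q_unit[OF u(3)] by simp
qed

lemma fiber_in:
  assumes u: "s \<in> gunits S" "t \<in> gunits T" "g \<in> garr G" "gr G g = p s" "gd G g = q t"
    and \<sigma>: "\<sigma> \<in> rfib S s" and \<tau>: "\<tau> \<in> rfib T t"
  shows "(\<sigma>, g, \<tau>) \<in> W" "gr P (\<sigma>, g, \<tau>) = (s, g, t)"
proof -
  have \<sigma>': "\<sigma> \<in> garr S" "gr S \<sigma> = s" using \<sigma> unfolding rfib_def by auto
  have \<tau>': "\<tau> \<in> garr T" "gr T \<tau> = t" using \<tau> unfolding rfib_def by auto
  show "(\<sigma>, g, \<tau>) \<in> W" unfolding W_iff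
    using \<sigma>' \<tau>' u p_rd[OF \<sigma>'(1)] q_rd[OF \<tau>'(1)] by simp
  show "gr P (\<sigma>, g, \<tau>) = (s, g, t)" unfolding gr_P using \<sigma>' \<tau>' by simp
qed

lemma lamP_eq: "lamP (s, g, t) = measure_of W (sets (borel_of (gtop P))) (emeasure (N s g t))"
  unfolding pullback_system_def N_def by simp

lemma sa_P: "sigma_algebra W (sets (borel_of (gtop P)))"
  using sets.sigma_algebra_axioms[of "borel_of (gtop P)"] by (simp add: garr_P)

lemma sets_lamP: "sets (lamP (s, g, t)) = sets (borel_of (gtop P))"
proof -
  have "sets (borel_of (gtop P)) \<subseteq> Pow W" using sets.sets_into_space[of _ "borel_of (gtop P)"] garr_P by auto
  then have "sets (lamP (s, g, t)) = sigma_sets W (sets (borel_of (gtop P)))"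
    unfolding lamP_eq by (rule sets_measure_of)
  then show ?thesis using sigma_algebra.sigma_sets_eq[OF sa_P] by simp
qed

lemma space_lamP: "space (lamP (s, g, t)) = W"
  unfolding lamP_eq by (simp add: space_measure_of_conv)

lemma emeasure_lamP:
  assumes "s \<in> gunits S" "g \<in> garr G" "t \<in> gunits T" and E: "E \<in> sets (borel_of (gtop P))"
  shows "emeasure (lamP (s, g, t)) E = emeasure (N s g t) E"
  unfolding lamP_eq
proof (rule emeasure_measure_of_sigma[OF sa_P _ _ E])
  show "positive (sets (borel_of (gtop P))) (emeasure (N s g t))" by (simp add: positive_def)
  show "countably_additive (sets (borel_of (gtop P))) (emeasure (N s g t))"
  proof (rule countably_additiveI)
    fix A :: "nat \<Rightarrow> _" assume A: "range A \<subseteq> sets (borel_of (gtop P))" "disjoint_family A"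
    then have "range A \<subseteq> sets (N s g t)" using sets_P_N[OF assms(1-3)] by blast
    then show "(\<Sum>i. emeasure (N s g t) (A i)) = emeasure (N s g t) (\<Union>i. A i)"
      using A(2) by (rule suminf_emeasure)
  qed
qed

end

context pbk begin

lemma g_space: "g \<in> garr G \<Longrightarrow> g \<in> space (borel_of (gtop G))"
  by simp

lemma emeasure_lamP_iter:
  assumes u: "s \<in> gunits S" "g \<in> garr G" "t \<in> gunits T" and E: "E \<in> sets (borel_of (gtop P))"
  shows "emeasure (lamP (s, g, t)) E = (\<integral>\<^sup>+ \<sigma>. \<integral>\<^sup>+ \<tau>. indicator E (\<sigma>, g, \<tau>) \<partial>lamT t \<partial>lamS s)"
proof -
  have EN: "E \<in> sets (N s g t)" using sets_P_N[OF u] E by blast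
  have "emeasure (lamP (s, g, t)) E = emeasure (N s g t) E" by (rule emeasure_lamP[OF u E])
  also have "\<dots> = (\<integral>\<^sup>+ z. indicator E z \<partial>N s g t)" using EN by simp
  also have "\<dots> = (\<integral>\<^sup>+ \<sigma>. \<integral>\<^sup>+ \<tau>. indicator E (\<sigma>, g, \<tau>) \<partial>lamT t \<partial>lamS s)"
    unfolding N_def
    by (rule fubini3[OF sfT[OF u(3)] g_space[OF u(2)]]) (use borel_measurable_indicator[OF EN] in \<open>simp add: N_def\<close>)
  finally show ?thesis .
qed

lemma nn_integral_lamP:
  assumes u: "s \<in> gunits S" "g \<in> garr G" "t \<in> gunits T"
    and h: "continuous_map Z euclideanreal h"
  shows "(\<integral>\<^sup>+ x. ennreal (h x) \<partial>lamP (s, g, t)) =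
         (\<integral>\<^sup>+ \<sigma>. \<integral>\<^sup>+ \<tau>. ennreal (h (\<sigma>, g, \<tau>)) * indicator W (\<sigma>, g, \<tau>) \<partial>lamT t \<partial>lamS s)"
proof -
  have WN: "W \<in> sets (N s g t)" using sets_Z_N[OF u] W_sets_Z by blast
  have spN: "space (N s g t) = topspace Z" by (rule space_N[OF u])
  have WsN: "W \<inter> space (N s g t) = W" using W_sub spN by blast
  have hZ: "h \<in> borel_measurable (borel_of Z)" by (rule borel_measurable_borel_of[OF h])
  have hN: "h \<in> borel_measurable (N s g t)"
    by (rule measurable_sets_mono[OF sets_Z_N[OF u] _ hZ]) (simp add: spN)
  have hP: "(\<lambda>x. ennreal (h x)) \<in> borel_measurable (lamP (s, g, t))"
  proof -
    have "continuous_map (gtop P) euclideanreal h" unfolding gtop_P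
      by (rule continuous_map_from_subtopology[OF h])
    then have "h \<in> borel_measurable (borel_of (gtop P))" by (rule borel_measurable_borel_of)
    then have "h \<in> borel_measurable (lamP (s, g, t))" by (rule meas_transfer[OF sets_lamP])
    then show ?thesis by (rule measurable_compose[OF _ measurable_ennreal])
  qed
  have "(\<integral>\<^sup>+ x. ennreal (h x) \<partial>lamP (s, g, t)) = (\<integral>\<^sup>+ x. ennreal (h x) \<partial>restrict_space (N s g t) W)"
  proof (rule nn_integral_subalgebra[OF hP])
    show "sets (lamP (s, g, t)) \<subseteq> sets (restrict_space (N s g t) W)"
    proof
      fix E assume "E \<in> sets (lamP (s, g, t))"
      then have E: "E \<in> sets (borel_of (gtop P))" by (simp add: sets_lamP)
      then have "E \<subseteq> W" using sets.sets_into_space[OF E] garr_P by simp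
      moreover have "E \<in> sets (N s g t)" using sets_P_N[OF u] E by blast
      ultimately show "E \<in> sets (restrict_space (N s g t) W)"
        unfolding sets_restrict_space by (intro image_eqI[of _ _ E]) auto
    qed
    show "space (lamP (s, g, t)) = space (restrict_space (N s g t) W)"
      using W_sub by (simp add: space_lamP space_restrict_space spN Int_absorb2)
    fix E assume "E \<in> sets (lamP (s, g, t))"
    then have E: "E \<in> sets (borel_of (gtop P))" by (simp add: sets_lamP)
    then have "E \<subseteq> W" using sets.sets_into_space[OF E] garr_P by simp
    have "emeasure (restrict_space (N s g t) W) E = emeasure (N s g t) E"
      by (rule emeasure_restrict_space) (use WN WsN \<open>E \<subseteq> W\<close> in simp_all)
    then show "emeasure (lamP (s, g, t)) E = emeasure (restrict_space (N s g t) W) E"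
      using emeasure_lamP[OF u E] by simp
  qed
  also have "\<dots> = (\<integral>\<^sup>+ x. ennreal (h x) * indicator W x \<partial>N s g t)"
    by (rule nn_integral_restrict_space) (use WN WsN in simp)
  also have "\<dots> = (\<integral>\<^sup>+ \<sigma>. \<integral>\<^sup>+ \<tau>. ennreal (h (\<sigma>, g, \<tau>)) * indicator W (\<sigma>, g, \<tau>) \<partial>lamT t \<partial>lamS s)"
  proof -
    have m: "(\<lambda>x. ennreal (h x) * indicator W x) \<in> borel_measurable (N s g t)"
      by (rule borel_measurable_times_ennreal[OF measurable_compose[OF hN measurable_ennreal] borel_measurable_indicator[OF WN]])
    show ?thesis unfolding N_def
      by (rule fubini3[OF sfT[OF u(3)] g_space[OF u(2)]]) (use m in \<open>simp add: N_def\<close>)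
  qed
  finally show ?thesis .
qed

lemma AE_fibS: "s \<in> gunits S \<Longrightarrow> AE \<sigma> in lamS s. \<sigma> \<in> rfib S s"
proof -
  assume s: "s \<in> gunits S"
  have "rfib S s \<in> sets (borel_of (gtop S))"
  proof -
    have "closedin (gtop S) {x \<in> topspace (gtop S). gr S x \<in> {s}}"
      by (rule closedin_continuous_map_preimage[OF crS closedin_t1_singleton[OF Hausdorff_imp_t1_space[OF HS]]])
         (use gpd_units_arr[OF gS s] in simp)
    then show ?thesis unfolding rfib_def by (simp add: borel_of_closed)
  qed
  then have "garr S - rfib S s \<in> sets (lamS s)" using spS[OF s] by (metis sets.compl_sets)
  then have "garr S - rfib S s \<in> null_sets (lamS s)" using nullS[OF s] by (simp add: null_sets_def)
  then show ?thesis by (rule AE_I') (use spS[OF s] in auto)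
qed

lemma AE_fibT: "t \<in> gunits T \<Longrightarrow> AE \<tau> in lamT t. \<tau> \<in> rfib T t"
proof -
  assume t: "t \<in> gunits T"
  have "rfib T t \<in> sets (borel_of (gtop T))"
  proof -
    have "closedin (gtop T) {x \<in> topspace (gtop T). gr T x \<in> {t}}"
      by (rule closedin_continuous_map_preimage[OF crT closedin_t1_singleton[OF Hausdorff_imp_t1_space[OF HT]]])
         (use gpd_units_arr[OF gT t] in simp)
    then show ?thesis unfolding rfib_def by (simp add: borel_of_closed)
  qed
  then have "garr T - rfib T t \<in> sets (lamT t)" using spT[OF t] by (metis sets.compl_sets)
  then have "garr T - rfib T t \<in> null_sets (lamT t)" using nullT[OF t] by (simp add: null_sets_def)
  then show ?thesis by (rule AE_I') (use spT[OF t] in auto)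
qed

end

context pbk begin

lemma cont_grZ: "continuous_map Z Z (\<lambda>z. (gr S (fst z), fst (snd z), gr T (snd (snd z))))"
proof -
  have a: "continuous_map Z (gtop S) (\<lambda>z. gr S (fst z))"
    using continuous_map_compose[OF cZ1 crS] by (simp add: o_def)
  have b: "continuous_map Z (gtop T) (\<lambda>z. gr T (snd (snd z)))"
    using continuous_map_compose[OF cZ3 crT] by (simp add: o_def)
  have c: "continuous_map Z (prod_topology (gtop G) (gtop T)) (\<lambda>z. (fst (snd z), gr T (snd (snd z))))"
    unfolding continuous_map_pairwise using cZ2 b by (simp add: o_def)
  show ?thesis by (rule iffD2[OF continuous_map_pairwise]) (simp add: o_def a c)
qed

lemma gr_P_fun: "gr P = (\<lambda>z. (gr S (fst z), fst (snd z), gr T (snd (snd z))))"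
  unfolding weak_pullback_def by (auto simp: fun_eq_iff split: prod.splits)

lemma closed_rfibP: assumes u: "u \<in> gunits P" shows "closedin (gtop P) (rfib P u)"
proof -
  have uZ: "u \<in> topspace Z" using unitsP_W[OF u] W_sub by blast
  have cP: "continuous_map (gtop P) Z (gr P)" unfolding gtop_P gr_P_fun
    by (rule continuous_map_from_subtopology[OF cont_grZ])
  have "closedin (gtop P) {x \<in> topspace (gtop P). gr P x \<in> {u}}"
    by (rule closedin_continuous_map_preimage[OF cP closedin_t1_singleton[OF Hausdorff_imp_t1_space[OF HZ] uZ]])
  then show ?thesis unfolding rfib_def by simp
qed

lemma sys_P: "system_of_measures P lamP"
  unfolding system_of_measures_def
proof (intro ballI conjI)
  fix u assume u: "u \<in> gunits P"
  then obtain s g t where uu: "u = (s, g, t)" "s \<in> gunits S" "t \<in> gunits T" "g \<in> garr G" "gr G g = p s" "gd G g = q t"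
    unfolding gunits_P by auto
  show "sets (lamP u) = sets (borel_of (gtop P))" unfolding uu(1) by (rule sets_lamP)
  show "space (lamP u) = garr P" unfolding uu(1) by (simp add: space_lamP garr_P)
  have E: "garr P - rfib P u \<in> sets (borel_of (gtop P))"
    using closed_rfibP[OF u] by (intro borel_of_open) blast
  have "emeasure (lamP u) (garr P - rfib P u) = (\<integral>\<^sup>+ \<sigma>. \<integral>\<^sup>+ \<tau>. indicator (garr P - rfib P u) (\<sigma>, g, \<tau>) \<partial>lamT t \<partial>lamS s)"
    unfolding uu(1) by (rule emeasure_lamP_iter[OF uu(2,4,3) E[unfolded uu(1)]])
  also have "\<dots> = (\<integral>\<^sup>+ \<sigma>. 0 \<partial>lamS s)"
  proof (rule nn_integral_cong_AE)
    show "AE \<sigma> in lamS s. (\<integral>\<^sup>+ \<tau>. indicator (garr P - rfib P u) (\<sigma>, g, \<tau>) \<partial>lamT t) = 0"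
      using AE_fibS[OF uu(2)]
    proof eventually_elim
      case (elim \<sigma>)
      have "(\<integral>\<^sup>+ \<tau>. indicator (garr P - rfib P u) (\<sigma>, g, \<tau>) \<partial>lamT t) = (\<integral>\<^sup>+ \<tau>. 0 \<partial>lamT t)"
      proof (rule nn_integral_cong_AE)
        show "AE \<tau> in lamT t. indicator (garr P - rfib P u) (\<sigma>, g, \<tau>) = (0::ennreal)"
          using AE_fibT[OF uu(3)]
        proof eventually_elim
          case (elim \<tau>)
          have "(\<sigma>, g, \<tau>) \<in> W" "gr P (\<sigma>, g, \<tau>) = (s, g, t)"
            using fiber_in[OF uu(2,3,4,5,6) \<open>\<sigma> \<in> rfib S s\<close> elim] by simp_all
          then have "(\<sigma>, g, \<tau>) \<in> rfib P u" unfolding rfib_def garr_P uu(1) by simp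
          then show ?case by simp
        qed
      qed
      then show ?case by simp
    qed
  qed
  also have "\<dots> = 0" by simp
  finally show "emeasure (lamP u) (garr P - rfib P u) = 0" .
qed

lemma pos_P: "positive_on_open P lamP"
  unfolding positive_on_open_def
proof (intro ballI allI impI)
  fix u A assume u: "u \<in> gunits P" and A: "openin (gtop P) A \<and> A \<inter> rfib P u \<noteq> {}"
  then obtain s g t where uu: "u = (s, g, t)" "s \<in> gunits S" "t \<in> gunits T" "g \<in> garr G" "gr G g = p s" "gd G g = q t"
    unfolding gunits_P by auto
  obtain y0 where y0: "y0 \<in> A" "y0 \<in> rfib P u" using A by blast
  obtain \<sigma>0 g0 \<tau>0 where y0e: "y0 = (\<sigma>0, g0, \<tau>0)" by (cases y0)
  have y0W: "y0 \<in> W" and gry0: "gr P y0 = u" using y0(2) unfolding rfib_def garr_P by auto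
  then have g0: "g0 = g" and r\<sigma>0: "gr S \<sigma>0 = s" and r\<tau>0: "gr T \<tau>0 = t" unfolding y0e uu(1) gr_P by auto
  have \<sigma>0: "\<sigma>0 \<in> garr S" and \<tau>0: "\<tau>0 \<in> garr T" using y0W unfolding y0e W_iff by auto
  obtain Ob where Ob: "openin Z Ob" "A = Ob \<inter> W" using A unfolding gtop_P openin_subtopology by blast
  have y0O: "(\<sigma>0, g, \<tau>0) \<in> Ob" using y0(1) Ob(2) y0e g0 by simp
  have "\<exists>U V. openin (gtop S) U \<and> openin (prod_topology (gtop G) (gtop T)) V \<and> \<sigma>0 \<in> U \<and> (g, \<tau>0) \<in> V \<and> U \<times> V \<subseteq> Ob"
    using Ob(1) y0O unfolding openin_prod_topology_alt by simp
  then obtain U V where UV: "openin (gtop S) U" "openin (prod_topology (gtop G) (gtop T)) V" "\<sigma>0 \<in> U" "(g, \<tau>0) \<in> V" "U \<times> V \<subseteq> Ob"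
    by (elim exE conjE) (rule that)
  have "\<exists>V1 V2. openin (gtop G) V1 \<and> openin (gtop T) V2 \<and> g \<in> V1 \<and> \<tau>0 \<in> V2 \<and> V1 \<times> V2 \<subseteq> V"
    using UV(2,4) unfolding openin_prod_topology_alt by simp
  then obtain V1 V2 where V12: "openin (gtop G) V1" "openin (gtop T) V2" "g \<in> V1" "\<tau>0 \<in> V2" "V1 \<times> V2 \<subseteq> V"
    by (elim exE conjE) (rule that)
  have Us: "U \<in> sets (lamS s)" using spS[OF uu(2)] borel_of_open[OF UV(1)] by simp
  have V2s: "V2 \<in> sets (lamT t)" using spT[OF uu(3)] borel_of_open[OF V12(2)] by simp
  have AP: "A \<in> sets (borel_of (gtop P))" using A by (intro borel_of_open) blast
  have pU: "emeasure (lamS s) U > 0"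
    using posS uu(2) UV(1) \<sigma>0 r\<sigma>0 UV(3) unfolding positive_on_open_def rfib_def by blast
  have pV: "emeasure (lamT t) V2 > 0"
    using posT uu(3) V12(2) \<tau>0 r\<tau>0 V12(4) unfolding positive_on_open_def rfib_def by blast
  have "emeasure (lamS s) U * emeasure (lamT t) V2 = (\<integral>\<^sup>+ \<sigma>. indicator U \<sigma> * emeasure (lamT t) V2 \<partial>lamS s)"
    using Us by (simp add: nn_integral_multc)
  also have "\<dots> = (\<integral>\<^sup>+ \<sigma>. \<integral>\<^sup>+ \<tau>. indicator U \<sigma> * indicator V2 \<tau> \<partial>lamT t \<partial>lamS s)"
    using V2s by (simp add: nn_integral_cmult)
  also have "\<dots> \<le> (\<integral>\<^sup>+ \<sigma>. \<integral>\<^sup>+ \<tau>. indicator A (\<sigma>, g, \<tau>) \<partial>lamT t \<partial>lamS s)"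
  proof (rule nn_integral_mono_AE)
    show "AE \<sigma> in lamS s. (\<integral>\<^sup>+ \<tau>. indicator U \<sigma> * indicator V2 \<tau> \<partial>lamT t) \<le> (\<integral>\<^sup>+ \<tau>. indicator A (\<sigma>, g, \<tau>) \<partial>lamT t)"
      using AE_fibS[OF uu(2)]
    proof eventually_elim
      case (elim \<sigma>)
      show ?case
      proof (rule nn_integral_mono_AE)
        show "AE \<tau> in lamT t. indicator U \<sigma> * indicator V2 \<tau> \<le> (indicator A (\<sigma>, g, \<tau>) :: ennreal)"
          using AE_fibT[OF uu(3)]
        proof eventually_elim
          case (elim \<tau>)
          have inW: "(\<sigma>, g, \<tau>) \<in> W" using fiber_in[OF uu(2,3,4,5,6) \<open>\<sigma> \<in> rfib S s\<close> elim] by simp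
          show ?case
          proof (cases "\<sigma> \<in> U \<and> \<tau> \<in> V2")
            case True
            then have "(\<sigma>, g, \<tau>) \<in> Ob" using UV(5) V12(3,5) by blast
            then have "(\<sigma>, g, \<tau>) \<in> A" using Ob(2) inW by simp
            then show ?thesis using True by simp
          next
            case False then show ?thesis by (auto simp: indicator_def)
          qed
        qed
      qed
    qed
  qed
  also have "\<dots> = emeasure (lamP u) A"
    unfolding uu(1) by (rule emeasure_lamP_iter[OF uu(2,4,3) AP, symmetric])
  finally have "emeasure (lamS s) U * emeasure (lamT t) V2 \<le> emeasure (lamP u) A" .
  moreover have "0 < emeasure (lamS s) U * emeasure (lamT t) V2" using pU pV by (simp add: ennreal_zero_less_mult_iff)
  ultimately show "0 < emeasure (lamP u) A" by (rule order.strict_trans2[rotated])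
qed

end

lemma cc_extend:
  assumes lc: "locally_compact_space Z" and H: "Hausdorff_space Z" and C: "closedin Z C"
    and f: "cc_nonneg (subtopology Z C) f"
  obtains h L where "continuous_map Z euclideanreal h" "\<And>z. z \<in> topspace Z \<Longrightarrow> 0 \<le> h z"
    "compactin Z L" "\<And>z. z \<in> topspace Z - L \<Longrightarrow> h z = 0" "\<And>z. z \<in> C \<Longrightarrow> h z = f z"
proof -
  have CZ: "C \<subseteq> topspace Z" using C closedin_subset by blast
  have tC: "topspace (subtopology Z C) = C" using CZ by (rule topspace_subtopology_subset)
  have fc: "continuous_map (subtopology Z C) euclideanreal f" and fnn: "\<And>z. z \<in> C \<Longrightarrow> 0 \<le> f z"
    using f tC unfolding cc_nonneg_def by auto
  obtain K where K: "compactin (subtopology Z C) K" "\<And>z. z \<in> C - K \<Longrightarrow> f z = 0"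
    using f tC unfolding cc_nonneg_def by auto
  have KZ: "compactin Z K" "K \<subseteq> C" using K(1) by (simp_all add: compactin_subtopology)
  have "\<exists>U L0. openin Z U \<and> compactin Z L0 \<and> closedin Z L0 \<and> K \<subseteq> U \<and> U \<subseteq> L0"
    using iffD1[OF locally_compact_space_compact_closed_compact[of Z], OF _ lc] H KZ(1) by blast
  then obtain U L0 where UL: "openin Z U" "compactin Z L0" "closedin Z L0" "K \<subseteq> U" "U \<subseteq> L0"
    by (elim exE conjE) (rule that)
  define C0 where "C0 = C \<inter> L0"
  have C0c: "compactin Z C0" unfolding C0_def using C UL(2) by (rule closed_Int_compactin)
  have cr: "completely_regular_space Z"
    using locally_compact_regular_imp_completely_regular_space lc H by blast
  have fc0: "continuous_map (subtopology Z C0) euclideanreal f"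
  proof -
    have "subtopology (subtopology Z C) C0 = subtopology Z C0"
      unfolding subtopology_subtopology C0_def by (simp add: Int_absorb1 inf_assoc)
    moreover have "continuous_map (subtopology (subtopology Z C) C0) euclideanreal f"
      by (rule continuous_map_from_subtopology[OF fc])
    ultimately show ?thesis by simp
  qed
  have fim: "f ` C0 \<subseteq> {0..}" using fnn unfolding C0_def by auto
  obtain g where g: "continuous_map Z euclideanreal g" "g ` topspace Z \<subseteq> {0..}" "\<And>x. x \<in> C0 \<Longrightarrow> g x = f x"
    using Tietze_extension_completely_regular[OF cr C0c _ _ fc0 fim] by auto
  obtain \<phi> L where \<phi>: "continuous_map Z euclideanreal \<phi>" "\<And>x. x \<in> topspace Z \<Longrightarrow> 0 \<le> \<phi> x \<and> \<phi> x \<le> 1"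
    "\<And>x. x \<in> K \<Longrightarrow> \<phi> x = 1" "compactin Z L" "L \<subseteq> U" "\<And>x. x \<in> topspace Z - L \<Longrightarrow> \<phi> x = 0"
    using bump[OF lc H KZ(1) UL(1,4)] by metis
  show ?thesis
  proof (rule that[of "\<lambda>z. g z * \<phi> z" L])
    show "continuous_map Z euclideanreal (\<lambda>z. g z * \<phi> z)" by (rule continuous_map_real_mult[OF g(1) \<phi>(1)])
    show "0 \<le> g z * \<phi> z" if "z \<in> topspace Z" for z using g(2) \<phi>(2) that by auto
    show "compactin Z L" by (rule \<phi>(4))
    show "g z * \<phi> z = 0" if "z \<in> topspace Z - L" for z using \<phi>(6)[OF that] by simp
    show "g z * \<phi> z = f z" if z: "z \<in> C" for z
    proof (cases "z \<in> L")
      case True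
      then have "z \<in> C0" unfolding C0_def using z \<phi>(5) UL(5) by blast
      then have gz: "g z = f z" by (rule g(3))
      show ?thesis
      proof (cases "z \<in> K")
        case True then show ?thesis using gz \<phi>(3) by simp
      next
        case False then show ?thesis using gz K(2) z by simp
      qed
    next
      case False
      then have "\<phi> z = 0" using \<phi>(6) z CZ by blast
      moreover have "z \<notin> K" using False \<phi>(3) \<phi>(6) z CZ by force
      ultimately show ?thesis using K(2) z by simp
    qed
  qed
qed

context pbk begin

lemma cont_P: "continuous_system P lamP"
  unfolding continuous_system_def
proof (intro allI impI)
  fix f assume f: "cc_nonneg (gtop P) f"
  obtain h L where h: "continuous_map Z euclideanreal h" "\<And>z. z \<in> topspace Z \<Longrightarrow> 0 \<le> h z"
    "compactin Z L" "\<And>z. z \<in> topspace Z - L \<Longrightarrow> h z = 0" "\<And>z. z \<in> W \<Longrightarrow> h z = f z"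
    using cc_extend[OF lcZ HZ closed_W f[unfolded gtop_P]] by blast
  have rep: "(\<integral>\<^sup>+ x. ennreal (f x) \<partial>lamP (s, g, t)) = (\<integral>\<^sup>+ \<sigma>. \<integral>\<^sup>+ \<tau>. ennreal (h (\<sigma>, g, \<tau>)) \<partial>lamT t \<partial>lamS s)"
    if uu: "s \<in> gunits S" "t \<in> gunits T" "g \<in> garr G" "gr G g = p s" "gd G g = q t" for s g t
  proof -
    have "(\<integral>\<^sup>+ x. ennreal (f x) \<partial>lamP (s, g, t)) = (\<integral>\<^sup>+ x. ennreal (h x) \<partial>lamP (s, g, t))"
      by (rule nn_integral_cong) (simp add: space_lamP h(5))
    also have "\<dots> = (\<integral>\<^sup>+ \<sigma>. \<integral>\<^sup>+ \<tau>. ennreal (h (\<sigma>, g, \<tau>)) * indicator W (\<sigma>, g, \<tau>) \<partial>lamT t \<partial>lamS s)"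
      by (rule nn_integral_lamP[OF uu(1,3,2) h(1)])
    also have "\<dots> = (\<integral>\<^sup>+ \<sigma>. \<integral>\<^sup>+ \<tau>. ennreal (h (\<sigma>, g, \<tau>)) \<partial>lamT t \<partial>lamS s)"
    proof (rule nn_integral_cong_AE)
      show "AE \<sigma> in lamS s. (\<integral>\<^sup>+ \<tau>. ennreal (h (\<sigma>, g, \<tau>)) * indicator W (\<sigma>, g, \<tau>) \<partial>lamT t) =
                            (\<integral>\<^sup>+ \<tau>. ennreal (h (\<sigma>, g, \<tau>)) \<partial>lamT t)"
        using AE_fibS[OF uu(1)]
      proof eventually_elim
        case (elim \<sigma>)
        show ?case
        proof (rule nn_integral_cong_AE)
          show "AE \<tau> in lamT t. ennreal (h (\<sigma>, g, \<tau>)) * indicator W (\<sigma>, g, \<tau>) = ennreal (h (\<sigma>, g, \<tau>))"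
            using AE_fibT[OF uu(2)]
          proof eventually_elim
            case (elim \<tau>)
            have "(\<sigma>, g, \<tau>) \<in> W" using fiber_in[OF uu \<open>\<sigma> \<in> rfib S s\<close> elim] by simp
            then show ?case by simp
          qed
        qed
      qed
    qed
    finally show ?thesis .
  qed
  define F1 where "F1 = (\<lambda>(\<tau>, (\<sigma>, \<gamma>)). h (\<sigma>, \<gamma>, \<tau>))"
  have F1c: "continuous_map (prod_topology (gtop T) (prod_topology (gtop S) (gtop G))) euclideanreal F1"
  proof -
    let ?Q = "prod_topology (gtop T) (prod_topology (gtop S) (gtop G))"
    have a: "continuous_map ?Q (gtop S) (\<lambda>z. fst (snd z))"
      using continuous_map_compose[OF continuous_map_snd continuous_map_fst] by (simp add: o_def)
    have b: "continuous_map ?Q (gtop G) (\<lambda>z. snd (snd z))"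
      using continuous_map_compose[OF continuous_map_snd continuous_map_snd] by (simp add: o_def)
    have c: "continuous_map ?Q (gtop T) fst" by (rule continuous_map_fst)
    have d: "continuous_map ?Q (prod_topology (gtop G) (gtop T)) (\<lambda>z. (snd (snd z), fst z))"
      by (rule iffD2[OF continuous_map_pairwise]) (simp add: o_def b c)
    have e: "continuous_map ?Q Z (\<lambda>z. (fst (snd z), snd (snd z), fst z))"
      by (rule iffD2[OF continuous_map_pairwise]) (simp add: o_def a d)
    have "continuous_map ?Q euclideanreal (h \<circ> (\<lambda>z. (fst (snd z), snd (snd z), fst z)))"
      by (rule continuous_map_compose[OF e h(1)])
    moreover have "h \<circ> (\<lambda>z. (fst (snd z), snd (snd z), fst z)) = F1"
      unfolding F1_def by (auto simp: fun_eq_iff)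
    ultimately show ?thesis by simp
  qed
  have F1nn: "0 \<le> F1 (\<tau>, y)" if "\<tau> \<in> topspace (gtop T)" "y \<in> topspace (prod_topology (gtop S) (gtop G))" for \<tau> y
    using that h(2) unfolding F1_def by (cases y) auto
  have K1: "compactin (gtop T) ((\<lambda>z. snd (snd z)) ` L)" by (rule image_compactin[OF h(3) cZ3])
  have F1z: "F1 (\<tau>, y) = 0" if "\<tau> \<in> topspace (gtop T) - (\<lambda>z. snd (snd z)) ` L" "y \<in> topspace (prod_topology (gtop S) (gtop G))" for \<tau> y
  proof -
    obtain \<sigma> \<gamma> where y: "y = (\<sigma>, \<gamma>)" by (cases y)
    have "(\<sigma>, \<gamma>, \<tau>) \<notin> L" using that(1) by (auto intro: rev_image_eqI)
    then have "(\<sigma>, \<gamma>, \<tau>) \<in> topspace Z - L" using that y by auto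
    then show ?thesis unfolding F1_def y using h(4) by simp
  qed
  note CP1 = cont_param[OF lcT HT spT csT F1c F1nn K1 F1z]
  define Y2 where "Y2 = prod_topology (gtop G) (subtopology (gtop T) (gunits T))"
  define F2 where "F2 = (\<lambda>(\<sigma>, (\<gamma>, t)). enn2real (\<integral>\<^sup>+ \<tau>. ennreal (h (\<sigma>, \<gamma>, \<tau>)) \<partial>lamT t))"
  have F2c: "continuous_map (prod_topology (gtop S) Y2) euclideanreal F2"
  proof -
    let ?Q = "prod_topology (gtop S) Y2"
    have a: "continuous_map ?Q (subtopology (gtop T) (gunits T)) (\<lambda>z. snd (snd z))"
      unfolding Y2_def using continuous_map_compose[OF continuous_map_snd continuous_map_snd] by (simp add: o_def)
    have b: "continuous_map ?Q (gtop G) (\<lambda>z. fst (snd z))"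
      unfolding Y2_def using continuous_map_compose[OF continuous_map_snd continuous_map_fst] by (simp add: o_def)
    have c: "continuous_map ?Q (gtop S) fst" by (rule continuous_map_fst)
    have d: "continuous_map ?Q (prod_topology (gtop S) (gtop G)) (\<lambda>z. (fst z, fst (snd z)))"
      by (rule iffD2[OF continuous_map_pairwise]) (simp add: o_def b c)
    have e: "continuous_map ?Q (prod_topology (subtopology (gtop T) (gunits T)) (prod_topology (gtop S) (gtop G)))
               (\<lambda>z. (snd (snd z), fst z, fst (snd z)))"
      by (rule iffD2[OF continuous_map_pairwise]) (simp add: o_def a d)
    show ?thesis
    proof (rule continuous_map_eq[OF continuous_map_compose[OF e CP1(1)]])
      fix z assume "z \<in> topspace ?Q"
      obtain \<sigma> \<gamma> t where z: "z = (\<sigma>, \<gamma>, t)" by (cases z) auto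
      show "((\<lambda>(u, y). enn2real (\<integral>\<^sup>+ x. ennreal (F1 (x, y)) \<partial>lamT u)) \<circ> (\<lambda>z. (snd (snd z), fst z, fst (snd z)))) z = F2 z"
        unfolding z F1_def F2_def by simp
    qed
  qed
  have F2nn: "0 \<le> F2 (\<sigma>, y)" for \<sigma> y unfolding F2_def by (cases y) simp
  have K2: "compactin (gtop S) (fst ` L)" by (rule image_compactin[OF h(3) cZ1])
  have F2z: "F2 (\<sigma>, y) = 0" if "\<sigma> \<in> topspace (gtop S) - fst ` L" "y \<in> topspace Y2" for \<sigma> y
  proof -
    obtain \<gamma> t where y: "y = (\<gamma>, t)" by (cases y)
    have \<gamma>: "\<gamma> \<in> garr G" and t: "t \<in> gunits T" using that(2) unfolding y Y2_def by auto
    have "(\<integral>\<^sup>+ \<tau>. ennreal (h (\<sigma>, \<gamma>, \<tau>)) \<partial>lamT t) = (\<integral>\<^sup>+ \<tau>. 0 \<partial>lamT t)"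
    proof (rule nn_integral_cong)
      fix \<tau> assume "\<tau> \<in> space (lamT t)"
      then have "\<tau> \<in> garr T" using spT[OF t] by simp
      moreover have "(\<sigma>, \<gamma>, \<tau>) \<notin> L" using that(1) by (auto intro: rev_image_eqI)
      ultimately have "(\<sigma>, \<gamma>, \<tau>) \<in> topspace Z - L" using that(1) \<gamma> by auto
      then show "ennreal (h (\<sigma>, \<gamma>, \<tau>)) = 0" using h(4) by simp
    qed
    then show ?thesis unfolding F2_def y by simp
  qed
  note CP2 = cont_param[OF lcS HS spS csS F2c F2nn K2 F2z]
  have eq: "(\<integral>\<^sup>+ x. ennreal (f x) \<partial>lamP u) = (\<integral>\<^sup>+ \<sigma>. ennreal (F2 (\<sigma>, (fst (snd u), snd (snd u)))) \<partial>lamS (fst u))"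
    and fin: "(\<integral>\<^sup>+ x. ennreal (f x) \<partial>lamP u) < \<infinity>"
    if u: "u \<in> gunits P" for u
  proof -
    obtain s g t where uu: "u = (s, g, t)" "s \<in> gunits S" "t \<in> gunits T" "g \<in> garr G" "gr G g = p s" "gd G g = q t"
      using u unfolding gunits_P by auto
    have "(\<integral>\<^sup>+ \<sigma>. \<integral>\<^sup>+ \<tau>. ennreal (h (\<sigma>, g, \<tau>)) \<partial>lamT t \<partial>lamS s) = (\<integral>\<^sup>+ \<sigma>. ennreal (F2 (\<sigma>, (g, t))) \<partial>lamS s)"
    proof (rule nn_integral_cong)
      fix \<sigma> assume "\<sigma> \<in> space (lamS s)"
      then have \<sigma>: "\<sigma> \<in> garr S" using spS[OF uu(2)] by simp
      have "(\<integral>\<^sup>+ \<tau>. ennreal (F1 (\<tau>, (\<sigma>, g))) \<partial>lamT t) < \<infinity>"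
        by (rule CP1(2)) (use uu(3,4) \<sigma> in simp_all)
      then have "(\<integral>\<^sup>+ \<tau>. ennreal (h (\<sigma>, g, \<tau>)) \<partial>lamT t) < \<infinity>" unfolding F1_def by simp
      then show "(\<integral>\<^sup>+ \<tau>. ennreal (h (\<sigma>, g, \<tau>)) \<partial>lamT t) = ennreal (F2 (\<sigma>, (g, t)))"
        unfolding F2_def by simp
    qed
    then show e: "(\<integral>\<^sup>+ x. ennreal (f x) \<partial>lamP u) = (\<integral>\<^sup>+ \<sigma>. ennreal (F2 (\<sigma>, (fst (snd u), snd (snd u)))) \<partial>lamS (fst u))"
      using rep[OF uu(2,3,4,5,6)] uu(1) by simp
    have "(\<integral>\<^sup>+ \<sigma>. ennreal (F2 (\<sigma>, (g, t))) \<partial>lamS s) < \<infinity>"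
      by (rule CP2(2)) (use uu(2,3,4) gpd_units_arr[OF gT uu(3)] in \<open>simp_all add: Y2_def\<close>)
    then show "(\<integral>\<^sup>+ x. ennreal (f x) \<partial>lamP u) < \<infinity>" using e uu(1) by simp
  qed
  show "(\<forall>u\<in>gunits P. (\<integral>\<^sup>+ x. ennreal (f x) \<partial>lamP u) < \<infinity>) \<and>
        continuous_map (subtopology (gtop P) (gunits P)) euclideanreal (\<lambda>u. enn2real (\<integral>\<^sup>+ x. ennreal (f x) \<partial>lamP u))"
  proof (intro conjI ballI)
    show "\<And>u. u \<in> gunits P \<Longrightarrow> (\<integral>\<^sup>+ x. ennreal (f x) \<partial>lamP u) < \<infinity>" by (rule fin)
    let ?PU = "subtopology (gtop P) (gunits P)"
    have tPU: "topspace ?PU = gunits P" using unitsP_W garr_P by auto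
    have i1: "continuous_map ?PU (subtopology (gtop S) (gunits S)) fst"
    proof -
      have "continuous_map ?PU (gtop S) fst"
        unfolding gtop_P by (rule continuous_map_from_subtopology[OF continuous_map_from_subtopology[OF cZ1]])
      moreover have "fst \<in> topspace ?PU \<rightarrow> gunits S" unfolding tPU gunits_P by auto
      ultimately show ?thesis unfolding continuous_map_in_subtopology by (rule conjI)
    qed
    have i2: "continuous_map ?PU (gtop G) (\<lambda>z. fst (snd z))"
      unfolding gtop_P by (rule continuous_map_from_subtopology[OF continuous_map_from_subtopology[OF cZ2]])
    have i3: "continuous_map ?PU (subtopology (gtop T) (gunits T)) (\<lambda>z. snd (snd z))"
    proof -
      have "continuous_map ?PU (gtop T) (\<lambda>z. snd (snd z))"
        unfolding gtop_P by (rule continuous_map_from_subtopology[OF continuous_map_from_subtopology[OF cZ3]])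
      moreover have "(\<lambda>z. snd (snd z)) \<in> topspace ?PU \<rightarrow> gunits T" unfolding tPU gunits_P by auto
      ultimately show ?thesis unfolding continuous_map_in_subtopology by (rule conjI)
    qed
    have i23: "continuous_map ?PU Y2 (\<lambda>z. (fst (snd z), snd (snd z)))"
      unfolding Y2_def by (rule iffD2[OF continuous_map_pairwise]) (simp add: o_def i2 i3)
    have i: "continuous_map ?PU (prod_topology (subtopology (gtop S) (gunits S)) Y2) (\<lambda>z. (fst z, fst (snd z), snd (snd z)))"
    proof -
      have i23': "continuous_map ?PU Y2 snd" using i23 by simp
      show ?thesis by (rule iffD2[OF continuous_map_pairwise]) (simp add: o_def i1 i23')
    qed
    show "continuous_map ?PU euclideanreal (\<lambda>u. enn2real (\<integral>\<^sup>+ x. ennreal (f x) \<partial>lamP u))"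
    proof (rule continuous_map_eq[OF continuous_map_compose[OF i CP2(1)]])
      fix u assume "u \<in> topspace ?PU"
      then have u: "u \<in> gunits P" using tPU by simp
      show "((\<lambda>(u, y). enn2real (\<integral>\<^sup>+ x. ennreal (F2 (x, y)) \<partial>lamS u)) \<circ> (\<lambda>z. (fst z, fst (snd z), snd (snd z)))) u =
            enn2real (\<integral>\<^sup>+ x. ennreal (f x) \<partial>lamP u)"
        using eq[OF u] by (simp add: split_beta)
    qed
  qed
qed

end

definition mfun :: "('a, 'b) tgroupoid_scheme \<Rightarrow> 'a \<Rightarrow> 'a \<Rightarrow> 'a" where
  "mfun X a y = (if y \<in> rfib X (gr X a) then gmul X (ginv X a) y else gd X a)"

context fixes X :: "('a, 'b) tgroupoid_scheme" and lam :: "'a \<Rightarrow> 'a measure"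
  assumes tX: "topological_groupoid X" and HX: "Hausdorff_space (gtop X)"
    and sX: "system_of_measures X lam" and liX: "left_invariant X lam"
begin

lemma gX: "groupoid X" using tX unfolding topological_groupoid_def by blast

lemma crX: "continuous_map (gtop X) (gtop X) (gr X)"
  using tX unfolding topological_groupoid_def by blast

lemma cmX: "continuous_map (subtopology (prod_topology (gtop X) (gtop X)) (composable X)) (gtop X) (\<lambda>(x, y). gmul X x y)"
  using tX unfolding topological_groupoid_def by blast

lemma spX: "u \<in> gunits X \<Longrightarrow> sets (lam u) = sets (borel_of (gtop X)) \<and> space (lam u) = garr X"
  using sX unfolding system_of_measures_def by blast

lemma nullX: "u \<in> gunits X \<Longrightarrow> emeasure (lam u) (garr X - rfib X u) = 0"
  using sX unfolding system_of_measures_def by blast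

lemma closed_rfibX: "u \<in> gunits X \<Longrightarrow> closedin (gtop X) (rfib X u)"
proof -
  assume u: "u \<in> gunits X"
  have "closedin (gtop X) {x \<in> topspace (gtop X). gr X x \<in> {u}}"
    by (rule closedin_continuous_map_preimage[OF crX closedin_t1_singleton[OF Hausdorff_imp_t1_space[OF HX]]])
       (use gpd_units_arr[OF gX u] in simp)
  then show ?thesis unfolding rfib_def by simp
qed

lemma rfib_sets: "u \<in> gunits X \<Longrightarrow> rfib X u \<in> sets (borel_of (gtop X))"
  using closed_rfibX by (rule borel_of_closed)

lemma cont_lmul:
  assumes a: "a \<in> garr X"
  shows "continuous_map (subtopology (gtop X) (rfib X (gd X a))) (gtop X) (gmul X a)"
proof -
  let ?D = "subtopology (gtop X) (rfib X (gd X a))"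
  have "continuous_map ?D (prod_topology (gtop X) (gtop X)) (\<lambda>y. (a, y))"
    by (rule iffD2[OF continuous_map_pairwise]) (simp add: o_def a continuous_map_from_subtopology)
  moreover have "(\<lambda>y. (a, y)) \<in> topspace ?D \<rightarrow> composable X"
    unfolding composable_def rfib_def using a by auto
  ultimately have "continuous_map ?D (subtopology (prod_topology (gtop X) (gtop X)) (composable X)) (\<lambda>y. (a, y))"
    unfolding continuous_map_in_subtopology by (rule conjI)
  from continuous_map_compose[OF this cmX] show ?thesis by (simp add: o_def)
qed

lemma lmul_pre_sets:
  assumes a: "a \<in> garr X" and B: "B \<in> sets (borel_of (gtop X))"
  shows "{y \<in> rfib X (gd X a). gmul X a y \<in> B} \<in> sets (borel_of (gtop X))"
proof -
  let ?D = "subtopology (gtop X) (rfib X (gd X a))"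
  have m: "gmul X a \<in> measurable (borel_of ?D) (borel_of (gtop X))"
    by (rule measurable_borel_of[OF cont_lmul[OF a]])
  have "gmul X a -` B \<inter> space (borel_of ?D) \<in> sets (borel_of ?D)" by (rule measurable_sets[OF m B])
  moreover have "gmul X a -` B \<inter> space (borel_of ?D) = {y \<in> rfib X (gd X a). gmul X a y \<in> B}"
    unfolding rfib_def by auto
  moreover have "sets (borel_of ?D) \<subseteq> sets (borel_of (gtop X))"
    by (rule sets_borel_of_subtopology[OF rfib_sets[OF gpd_rd_units[OF gX a, THEN conjunct2]]])
  ultimately show ?thesis by auto
qed

lemma mfun_meas:
  assumes a: "a \<in> garr X"
  shows "mfun X a \<in> measurable (lam (gr X a)) (borel_of (gtop X))"
proof -
  note i = gpd_inv[OF gX a]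
  have ra: "gr X a \<in> gunits X" and da: "gd X a \<in> gunits X" using gpd_rd_units[OF gX a] by auto
  have dai: "gd X (ginv X a) = gr X a" using i by simp
  show ?thesis unfolding measurable_def
  proof (intro CollectI conjI ballI)
    show "mfun X a \<in> space (lam (gr X a)) \<rightarrow> space (borel_of (gtop X))"
    proof
      fix y assume "y \<in> space (lam (gr X a))"
      then have y: "y \<in> garr X" using spX[OF ra] by simp
      show "mfun X a y \<in> space (borel_of (gtop X))"
      proof (cases "y \<in> rfib X (gr X a)")
        case True
        then have "gr X y = gr X a" unfolding rfib_def by simp
        then have "gmul X (ginv X a) y \<in> garr X" using gpd_mul[OF gX _ y] i by simp
        then show ?thesis using True unfolding mfun_def by simp
      next
        case False then show ?thesis unfolding mfun_def using gpd_units_arr[OF gX da] by simp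
      qed
    qed
    fix B assume B: "B \<in> sets (borel_of (gtop X))"
    have "mfun X a -` B \<inter> space (lam (gr X a)) =
          {y \<in> rfib X (gd X (ginv X a)). gmul X (ginv X a) y \<in> B} \<union> (if gd X a \<in> B then garr X - rfib X (gr X a) else {})"
      unfolding mfun_def dai using spX[OF ra] by (auto simp: rfib_def split: if_splits)
    moreover have "{y \<in> rfib X (gd X (ginv X a)). gmul X (ginv X a) y \<in> B} \<in> sets (borel_of (gtop X))"
      using lmul_pre_sets[OF conjunct1[OF i] B] .
    moreover have "garr X - rfib X (gr X a) \<in> sets (borel_of (gtop X))"
      using rfib_sets[OF ra] sets.compl_sets[of "rfib X (gr X a)" "borel_of (gtop X)"] by simp
    ultimately show "mfun X a -` B \<inter> space (lam (gr X a)) \<in> sets (lam (gr X a))"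
      using spX[OF ra] by auto
  qed
qed

lemma distr_LI:
  assumes a: "a \<in> garr X"
  shows "distr (lam (gr X a)) (borel_of (gtop X)) (mfun X a) = lam (gd X a)"
proof (rule measure_eqI)
  note i = gpd_inv[OF gX a]
  have ra: "gr X a \<in> gunits X" and da: "gd X a \<in> gunits X" using gpd_rd_units[OF gX a] by auto
  have dai: "gd X (ginv X a) = gr X a" using i by simp
  show "sets (distr (lam (gr X a)) (borel_of (gtop X)) (mfun X a)) = sets (lam (gd X a))"
    using spX[OF da] by simp
  fix B assume "B \<in> sets (distr (lam (gr X a)) (borel_of (gtop X)) (mfun X a))"
  then have B: "B \<in> sets (borel_of (gtop X))" by simp
  define Bp where "Bp = {y \<in> rfib X (gr X a). gmul X (ginv X a) y \<in> B}"
  define R where "R = (if gd X a \<in> B then garr X - rfib X (gr X a) else {})"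
  have Bps: "Bp \<in> sets (lam (gr X a))"
    using lmul_pre_sets[OF conjunct1[OF i] B] spX[OF ra] unfolding Bp_def dai by simp
  have Rn: "R \<in> null_sets (lam (gr X a))"
  proof (cases "gd X a \<in> B")
    case True
    have "garr X - rfib X (gr X a) \<in> sets (lam (gr X a))"
      using rfib_sets[OF ra] sets.compl_sets[of "rfib X (gr X a)" "borel_of (gtop X)"] spX[OF ra] by simp
    then show ?thesis using True nullX[OF ra] unfolding R_def by (simp add: null_sets_def)
  next
    case False then show ?thesis unfolding R_def by simp
  qed
  have pre: "mfun X a -` B \<inter> space (lam (gr X a)) = Bp \<union> R"
    unfolding mfun_def Bp_def R_def using spX[OF ra] by (auto simp: rfib_def split: if_splits)
  have eqset: "Bp = ltrans X a (B \<inter> rfib X (gd X a))"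
  proof
    show "Bp \<subseteq> ltrans X a (B \<inter> rfib X (gd X a))"
    proof
      fix y assume "y \<in> Bp"
      then have y: "y \<in> garr X" "gr X y = gr X a" "gmul X (ginv X a) y \<in> B" unfolding Bp_def rfib_def by auto
      let ?z = "gmul X (ginv X a) y"
      have z: "?z \<in> garr X" "gr X ?z = gd X a" using gpd_mul[OF gX conjunct1[OF i] y(1)] i y(2) by simp_all
      have "gmul X a ?z = y" by (rule gpd_mul_inv_cancel[OF gX a y(1,2)])
      moreover have "?z \<in> B \<inter> rfib X (gd X a)" using z y(3) unfolding rfib_def by simp
      ultimately show "y \<in> ltrans X a (B \<inter> rfib X (gd X a))" unfolding ltrans_def by (intro image_eqI[where x="?z"]) auto
    qed
    show "ltrans X a (B \<inter> rfib X (gd X a)) \<subseteq> Bp"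
    proof
      fix y assume "y \<in> ltrans X a (B \<inter> rfib X (gd X a))"
      then obtain z where z: "z \<in> B" "z \<in> garr X" "gr X z = gd X a" "y = gmul X a z"
        unfolding ltrans_def rfib_def by auto
      have "y \<in> garr X" "gr X y = gr X a" using gpd_mul[OF gX a z(2)] z(3,4) by simp_all
      moreover have "gmul X (ginv X a) y = z" using gpd_inv_mul_cancel[OF gX a z(2)] z(3,4) by simp
      ultimately show "y \<in> Bp" unfolding Bp_def rfib_def using z(1) by simp
    qed
  qed
  have "emeasure (distr (lam (gr X a)) (borel_of (gtop X)) (mfun X a)) B = emeasure (lam (gr X a)) (Bp \<union> R)"
    using emeasure_distr[OF mfun_meas[OF a] B] pre by simp
  also have "\<dots> = emeasure (lam (gr X a)) Bp" by (rule emeasure_Un_null_set[OF Bps Rn])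
  also have "\<dots> = emeasure (lam (gd X a)) B"
    using liX a B unfolding left_invariant_def eqset by simp
  finally show "emeasure (distr (lam (gr X a)) (borel_of (gtop X)) (mfun X a)) B = emeasure (lam (gd X a)) B" .
qed

lemma nn_integral_LI:
  assumes a: "a \<in> garr X" and k: "k \<in> borel_measurable (borel_of (gtop X))"
  shows "(\<integral>\<^sup>+ y. k y \<partial>lam (gd X a)) = (\<integral>\<^sup>+ y. k (mfun X a y) \<partial>lam (gr X a))"
proof -
  have "(\<integral>\<^sup>+ y. k y \<partial>lam (gd X a)) = (\<integral>\<^sup>+ y. k y \<partial>distr (lam (gr X a)) (borel_of (gtop X)) (mfun X a))"
    using distr_LI[OF a] by simp
  also have "\<dots> = (\<integral>\<^sup>+ y. k (mfun X a y) \<partial>lam (gr X a))"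
    by (rule nn_integral_distr[OF mfun_meas[OF a]]) (use k in simp)
  finally show ?thesis .
qed

end

context pbk begin

lemma LI_S: "a \<in> garr S \<Longrightarrow> k \<in> borel_measurable (borel_of (gtop S)) \<Longrightarrow>
   (\<integral>\<^sup>+ y. k y \<partial>lamS (gd S a)) = (\<integral>\<^sup>+ y. k (mfun S a y) \<partial>lamS (gr S a))"
  by (rule nn_integral_LI[OF tS HS sysS liS])

lemma LI_T: "a \<in> garr T \<Longrightarrow> k \<in> borel_measurable (borel_of (gtop T)) \<Longrightarrow>
   (\<integral>\<^sup>+ y. k y \<partial>lamT (gd T a)) = (\<integral>\<^sup>+ y. k (mfun T a y) \<partial>lamT (gr T a))"
  by (rule nn_integral_LI[OF tT HT sysT liT])

lemma mfunS_arr: "a \<in> garr S \<Longrightarrow> y \<in> garr S \<Longrightarrow> mfun S a y \<in> garr S"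
  using measurable_space[OF mfun_meas[OF tS HS sysS liS]] spS gpd_rd_units[OF gS] by fastforce

lemma mfunT_arr: "a \<in> garr T \<Longrightarrow> y \<in> garr T \<Longrightarrow> mfun T a y \<in> garr T"
  using measurable_space[OF mfun_meas[OF tT HT sysT liT]] spT gpd_rd_units[OF gT] by fastforce

lemma sec_meas_T:
  assumes s: "s \<in> gunits S" and g: "g \<in> garr G" and t: "t \<in> gunits T" and E: "E \<in> sets (N s g t)"
    and a: "a \<in> garr S"
  shows "(\<lambda>\<tau>. indicator E (a, g, \<tau>) :: ennreal) \<in> borel_measurable (borel_of (gtop T))"
proof -
  have "(\<lambda>\<tau>. (a, g, \<tau>)) \<in> measurable (lamT t) (N s g t)"
    unfolding N_def
    by (rule measurable_Pair) (use a spS[OF s] g in \<open>simp_all add: measurable_Pair1'\<close>)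
  from measurable_compose[OF this borel_measurable_indicator[OF E]]
  have "(\<lambda>\<tau>. indicator E (a, g, \<tau>) :: ennreal) \<in> borel_measurable (lamT t)" by simp
  then show ?thesis by (rule meas_transfer[OF conjunct1[OF spT[OF t], symmetric]])
qed

lemma sec_meas_S:
  assumes s: "s \<in> gunits S" and g: "g \<in> garr G" and t: "t \<in> gunits T" and E: "E \<in> sets (N s g t)"
  shows "(\<lambda>\<sigma>. \<integral>\<^sup>+ \<tau>. indicator E (\<sigma>, g, \<tau>) \<partial>lamT t) \<in> borel_measurable (borel_of (gtop S))"
proof -
  have m1: "(\<lambda>z. (fst z, g, snd z)) \<in> measurable (lamS s \<Otimes>\<^sub>M lamT t) (N s g t)"
    unfolding N_def
  proof (rule measurable_Pair)
    show "fst \<in> measurable (lamS s \<Otimes>\<^sub>M lamT t) (lamS s)" by simp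
    show "(\<lambda>z. (g, snd z)) \<in> measurable (lamS s \<Otimes>\<^sub>M lamT t) (return (borel_of (gtop G)) g \<Otimes>\<^sub>M lamT t)"
      by (rule measurable_Pair) (use g in simp_all)
  qed
  have "(\<lambda>z. indicator E (fst z, g, snd z) :: ennreal) \<in> borel_measurable (lamS s \<Otimes>\<^sub>M lamT t)"
    using measurable_compose[OF m1 borel_measurable_indicator[OF E]] by (simp add: o_def)
  then have "(\<lambda>\<sigma>. \<integral>\<^sup>+ \<tau>. indicator E (fst (\<sigma>, \<tau>), g, snd (\<sigma>, \<tau>)) \<partial>lamT t) \<in> borel_measurable (lamS s)"
    by (rule sigma_finite_measure.borel_measurable_nn_integral_fst[OF sfT[OF t]])
  then have "(\<lambda>\<sigma>. \<integral>\<^sup>+ \<tau>. indicator E (\<sigma>, g, \<tau>) \<partial>lamT t) \<in> borel_measurable (lamS s)" by simp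
  then show ?thesis by (rule meas_transfer[OF conjunct1[OF spS[OF s], symmetric]])
qed

end

context pbk begin

lemma li_P: "left_invariant P lamP"
  unfolding left_invariant_def
proof (intro ballI)
  fix x E assume x: "x \<in> garr P" and E: "E \<in> sets (borel_of (gtop P))"
  obtain s g t where xe: "x = (s, g, t)" by (cases x)
  have xW: "(s, g, t) \<in> W" using x xe garr_P by simp
  then have s: "s \<in> garr S" and g: "g \<in> garr G" and t: "t \<in> garr T"
    and rg: "gr G g = gr G (p s)" and dg: "gd G g = gr G (q t)" unfolding W_iff by auto
  define h0 where "h0 = gmul G (gmul G (ginv G (p s)) g) (q t)"
  have dsU: "gd S s \<in> gunits S" and rsU: "gr S s \<in> gunits S" using gpd_rd_units[OF gS s] by auto
  have dtU: "gd T t \<in> gunits T" and rtU: "gr T t \<in> gunits T" using gpd_rd_units[OF gT t] by auto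
  have ps: "p s \<in> garr G" using p_arr[OF s] .
  have qt: "q t \<in> garr G" using q_arr[OF t] .
  note ips = gpd_inv[OF gG ps]
  have m1: "gmul G (ginv G (p s)) g \<in> garr G" "gr G (gmul G (ginv G (p s)) g) = gd G (p s)"
    "gd G (gmul G (ginv G (p s)) g) = gd G g"
    using gpd_mul[OF gG conjunct1[OF ips] g] ips rg by simp_all
  have h0: "h0 \<in> garr G" "gr G h0 = p (gd S s)" "gd G h0 = q (gd T t)"
    using gpd_mul[OF gG m1(1) qt] m1 dg p_rd[OF s] q_rd[OF t] unfolding h0_def by simp_all
  have grg: "gr G g = p (gr S s)" "gd G g = q (gr T t)" using rg dg p_rd[OF s] q_rd[OF t] by simp_all
  have dxe: "gd P x = (gd S s, h0, gd T t)" unfolding xe gd_P h0_def by simp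
  have rxe: "gr P x = (gr S s, g, gr T t)" unfolding xe gr_P by simp
  have rxU: "gr P x \<in> gunits P" unfolding rxe gunits_P using rsU rtU g grg by simp
  define A where "A = ltrans P x (E \<inter> rfib P (gd P x))"
  have EW: "E \<subseteq> W" using sets.sets_into_space[OF E] garr_P by simp
  have C1: "(\<sigma>', g, \<tau>') \<in> A \<longleftrightarrow> (mfun S s \<sigma>', h0, mfun T t \<tau>') \<in> E"
    if \<sigma>': "\<sigma>' \<in> rfib S (gr S s)" and \<tau>': "\<tau>' \<in> rfib T (gr T t)" for \<sigma>' \<tau>'
  proof -
    have \<sigma>'a: "\<sigma>' \<in> garr S" "gr S \<sigma>' = gr S s" using \<sigma>' unfolding rfib_def by auto
    have \<tau>'a: "\<tau>' \<in> garr T" "gr T \<tau>' = gr T t" using \<tau>' unfolding rfib_def by auto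
    have ms: "mfun S s \<sigma>' = gmul S (ginv S s) \<sigma>'" using \<sigma>' unfolding mfun_def by simp
    have mt: "mfun T t \<tau>' = gmul T (ginv T t) \<tau>'" using \<tau>' unfolding mfun_def by simp
    note iS = gpd_inv[OF gS s] and iT = gpd_inv[OF gT t]
    have \<sigma>1: "gmul S (ginv S s) \<sigma>' \<in> garr S" "gr S (gmul S (ginv S s) \<sigma>') = gd S s"
      using gpd_mul[OF gS conjunct1[OF iS] \<sigma>'a(1)] iS \<sigma>'a(2) by simp_all
    have \<tau>1: "gmul T (ginv T t) \<tau>' \<in> garr T" "gr T (gmul T (ginv T t) \<tau>') = gd T t"
      using gpd_mul[OF gT conjunct1[OF iT] \<tau>'a(1)] iT \<tau>'a(2) by simp_all
    have c\<sigma>: "gmul S s (gmul S (ginv S s) \<sigma>') = \<sigma>'" by (rule gpd_mul_inv_cancel[OF gS s \<sigma>'a(1,2)])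
    have c\<tau>: "gmul T t (gmul T (ginv T t) \<tau>') = \<tau>'" by (rule gpd_mul_inv_cancel[OF gT t \<tau>'a(1,2)])
    show ?thesis
    proof
      assume "(\<sigma>', g, \<tau>') \<in> A"
      then obtain y where y: "y \<in> E" "y \<in> rfib P (gd P x)" "(\<sigma>', g, \<tau>') = gmul P x y"
        unfolding A_def ltrans_def by auto
      obtain \<sigma> h \<tau> where ye: "y = (\<sigma>, h, \<tau>)" by (cases y)
      have yW: "(\<sigma>, h, \<tau>) \<in> W" using y(1) EW ye by blast
      have "gr P (\<sigma>, h, \<tau>) = (gd S s, h0, gd T t)" using y(2) ye dxe unfolding rfib_def by simp
      then have r\<sigma>: "gr S \<sigma> = gd S s" and hh: "h = h0" and r\<tau>: "gr T \<tau> = gd T t" unfolding gr_P by auto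
      have \<sigma>a: "\<sigma> \<in> garr S" and \<tau>a: "\<tau> \<in> garr T" using yW unfolding W_iff by auto
      have "\<sigma>' = gmul S s \<sigma>" "\<tau>' = gmul T t \<tau>" using y(3) ye xe gmul_P by simp_all
      then have "gmul S (ginv S s) \<sigma>' = \<sigma>" "gmul T (ginv T t) \<tau>' = \<tau>"
        using gpd_inv_mul_cancel[OF gS s \<sigma>a r\<sigma>] gpd_inv_mul_cancel[OF gT t \<tau>a r\<tau>] by simp_all
      then show "(mfun S s \<sigma>', h0, mfun T t \<tau>') \<in> E" using ms mt y(1) ye hh by simp
    next
      assume e: "(mfun S s \<sigma>', h0, mfun T t \<tau>') \<in> E"
      let ?y = "(gmul S (ginv S s) \<sigma>', h0, gmul T (ginv T t) \<tau>')"
      have yE: "?y \<in> E" using e ms mt by simp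
      have "?y \<in> W" using yE EW by blast
      moreover have "gr P ?y = gd P x" unfolding gr_P dxe using \<sigma>1 \<tau>1 by simp
      ultimately have "?y \<in> rfib P (gd P x)" unfolding rfib_def garr_P by simp
      moreover have "gmul P x ?y = (\<sigma>', g, \<tau>')" unfolding xe gmul_P using c\<sigma> c\<tau> by simp
      ultimately show "(\<sigma>', g, \<tau>') \<in> A" unfolding A_def ltrans_def using yE by (intro image_eqI[where x="?y"]) auto
    qed
  qed
  have A_sub: "A \<subseteq> rfib P (gr P x)"
  proof
    fix y' assume "y' \<in> A"
    then obtain y where y: "y \<in> E" "y \<in> rfib P (gd P x)" "y' = gmul P x y"
      unfolding A_def ltrans_def by auto
    obtain \<sigma> h \<tau> where ye: "y = (\<sigma>, h, \<tau>)" by (cases y)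
    have yW: "(\<sigma>, h, \<tau>) \<in> W" using y(1) EW ye by blast
    have "gr P (\<sigma>, h, \<tau>) = (gd S s, h0, gd T t)" using y(2) ye dxe unfolding rfib_def by simp
    then have r\<sigma>: "gr S \<sigma> = gd S s" and r\<tau>: "gr T \<tau> = gd T t" unfolding gr_P by auto
    have \<sigma>a: "\<sigma> \<in> garr S" and \<tau>a: "\<tau> \<in> garr T" using yW unfolding W_iff by auto
    have f1: "gmul S s \<sigma> \<in> rfib S (gr S s)" using gpd_mul[OF gS s \<sigma>a] r\<sigma> unfolding rfib_def by simp
    have f2: "gmul T t \<tau> \<in> rfib T (gr T t)" using gpd_mul[OF gT t \<tau>a] r\<tau> unfolding rfib_def by simp
    have y'e: "y' = (gmul S s \<sigma>, g, gmul T t \<tau>)" using y(3) ye xe gmul_P by simp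
    show "y' \<in> rfib P (gr P x)"
      using fiber_in[OF rsU rtU g grg f1 f2] y'e rxe unfolding rfib_def garr_P by simp
  qed
  define \<Psi> :: "'s \<times> 'g \<times> 't \<Rightarrow> 's \<times> 'g \<times> 't" where "\<Psi> y = (gmul S (ginv S s) (fst y), h0, gmul T (ginv T t) (snd (snd y)))" for y
  have A_eq: "A = {y \<in> rfib P (gr P x). \<Psi> y \<in> E}"
  proof (intro set_eqI iffI)
    fix y assume yA: "y \<in> A"
    then have yr: "y \<in> rfib P (gr P x)" using A_sub by blast
    obtain \<sigma>' g' \<tau>' where ye: "y = (\<sigma>', g', \<tau>')" by (cases y)
    have "(\<sigma>', g', \<tau>') \<in> W" "gr P (\<sigma>', g', \<tau>') = (gr S s, g, gr T t)" using yr ye rxe unfolding rfib_def garr_P by auto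
    then have f: "\<sigma>' \<in> rfib S (gr S s)" "g' = g" "\<tau>' \<in> rfib T (gr T t)" unfolding W_iff gr_P rfib_def by auto
    have "(mfun S s \<sigma>', h0, mfun T t \<tau>') \<in> E" using C1[OF f(1,3)] yA ye f(2) by simp
    then have "\<Psi> y \<in> E" unfolding \<Psi>_def ye using f(1,3) by (simp add: mfun_def)
    then show "y \<in> {y \<in> rfib P (gr P x). \<Psi> y \<in> E}" using yr by simp
  next
    fix y assume "y \<in> {y \<in> rfib P (gr P x). \<Psi> y \<in> E}"
    then have yr: "y \<in> rfib P (gr P x)" and yE: "\<Psi> y \<in> E" by auto
    obtain \<sigma>' g' \<tau>' where ye: "y = (\<sigma>', g', \<tau>')" by (cases y)
    have "(\<sigma>', g', \<tau>') \<in> W" "gr P (\<sigma>', g', \<tau>') = (gr S s, g, gr T t)" using yr ye rxe unfolding rfib_def garr_P by auto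
    then have f: "\<sigma>' \<in> rfib S (gr S s)" "g' = g" "\<tau>' \<in> rfib T (gr T t)" unfolding W_iff gr_P rfib_def by auto
    have "(mfun S s \<sigma>', h0, mfun T t \<tau>') \<in> E" using yE f(1,3) unfolding \<Psi>_def ye by (simp add: mfun_def)
    then show "y \<in> A" using C1[OF f(1,3)] ye f(2) by simp
  qed
  have rfibPx: "rfib P (gr P x) \<in> sets (borel_of (gtop P))" by (rule borel_of_closed[OF closed_rfibP[OF rxU]])
  have A_meas: "A \<in> sets (borel_of (gtop P))"
  proof -
    let ?D = "subtopology (gtop P) (rfib P (gr P x))"
    have tD: "topspace ?D = rfib P (gr P x)" using garr_P unfolding rfib_def by auto
    note iS = gpd_inv[OF gS s] and iT = gpd_inv[OF gT t]
    have c1: "continuous_map ?D (gtop S) (\<lambda>y. gmul S (ginv S s) (fst y))"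
    proof -
      have "continuous_map ?D (gtop S) fst"
        unfolding gtop_P by (rule continuous_map_from_subtopology[OF continuous_map_from_subtopology[OF cZ1]])
      moreover have "fst \<in> topspace ?D \<rightarrow> rfib S (gd S (ginv S s))"
        unfolding tD rxe using iS by (auto simp: rfib_def gr_P_fun garr_P W_iff)
      ultimately have "continuous_map ?D (subtopology (gtop S) (rfib S (gd S (ginv S s)))) fst"
        unfolding continuous_map_in_subtopology by (rule conjI)
      from continuous_map_compose[OF this cont_lmul[OF tS HS sysS liS conjunct1[OF iS]]]
      show ?thesis by (simp add: o_def)
    qed
    have c3: "continuous_map ?D (gtop T) (\<lambda>y. gmul T (ginv T t) (snd (snd y)))"
    proof -
      have "continuous_map ?D (gtop T) (\<lambda>y. snd (snd y))"
        unfolding gtop_P by (rule continuous_map_from_subtopology[OF continuous_map_from_subtopology[OF cZ3]])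
      moreover have "(\<lambda>y. snd (snd y)) \<in> topspace ?D \<rightarrow> rfib T (gd T (ginv T t))"
        unfolding tD rxe using iT by (auto simp: rfib_def gr_P_fun garr_P W_iff)
      ultimately have "continuous_map ?D (subtopology (gtop T) (rfib T (gd T (ginv T t)))) (\<lambda>y. snd (snd y))"
        unfolding continuous_map_in_subtopology by (rule conjI)
      from continuous_map_compose[OF this cont_lmul[OF tT HT sysT liT conjunct1[OF iT]]]
      show ?thesis by (simp add: o_def)
    qed
    have c2: "continuous_map ?D (gtop G) (\<lambda>y. h0)" by (rule iffD2[OF continuous_map_const], rule disjI2, rule h0(1))
    have c23: "continuous_map ?D (prod_topology (gtop G) (gtop T)) (\<lambda>y. (h0, gmul T (ginv T t) (snd (snd y))))"
      by (rule iffD2[OF continuous_map_pairwise]) (simp add: o_def c3 h0(1))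
    have cZ: "continuous_map ?D Z \<Psi>"
      unfolding \<Psi>_def by (rule iffD2[OF continuous_map_pairwise]) (simp add: o_def c1 c23)
    have \<Psi>W: "\<Psi> \<in> topspace ?D \<rightarrow> W"
    proof
      fix y assume "y \<in> topspace ?D"
      then have yr: "y \<in> rfib P (gr P x)" using tD by simp
      obtain \<sigma>' g' \<tau>' where ye: "y = (\<sigma>', g', \<tau>')" by (cases y)
      have "(\<sigma>', g', \<tau>') \<in> W" "gr P (\<sigma>', g', \<tau>') = (gr S s, g, gr T t)" using yr ye rxe unfolding rfib_def garr_P by auto
      then have \<sigma>'a: "\<sigma>' \<in> garr S" "gr S \<sigma>' = gr S s" and \<tau>'a: "\<tau>' \<in> garr T" "gr T \<tau>' = gr T t"
        unfolding W_iff gr_P by auto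
      have f1: "gmul S (ginv S s) \<sigma>' \<in> rfib S (gd S s)"
        using gpd_mul[OF gS conjunct1[OF iS] \<sigma>'a(1)] iS \<sigma>'a(2) unfolding rfib_def by simp
      have f2: "gmul T (ginv T t) \<tau>' \<in> rfib T (gd T t)"
        using gpd_mul[OF gT conjunct1[OF iT] \<tau>'a(1)] iT \<tau>'a(2) unfolding rfib_def by simp
      show "\<Psi> y \<in> W" unfolding \<Psi>_def ye using fiber_in(1)[OF dsU dtU h0 f1 f2] by simp
    qed
    have "continuous_map ?D (subtopology Z W) \<Psi>"
      unfolding continuous_map_in_subtopology using cZ \<Psi>W by (rule conjI)
    then have cP: "continuous_map ?D (gtop P) \<Psi>" by (simp add: gtop_P)
    have "\<Psi> -` E \<inter> space (borel_of ?D) \<in> sets (borel_of ?D)"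
      by (rule measurable_sets[OF measurable_borel_of[OF cP] E])
    moreover have "\<Psi> -` E \<inter> space (borel_of ?D) = A" unfolding A_eq using tD by auto
    moreover have "sets (borel_of ?D) \<subseteq> sets (borel_of (gtop P))"
      by (rule sets_borel_of_subtopology[OF rfibPx])
    ultimately show ?thesis by auto
  qed
  have EN: "E \<in> sets (N (gd S s) h0 (gd T t))" using sets_P_N[OF dsU h0(1) dtU] E by blast
  define \<Phi> where "\<Phi> \<sigma> = (\<integral>\<^sup>+ \<tau>. indicator E (\<sigma>, h0, \<tau>) \<partial>lamT (gd T t))" for \<sigma>
  have "emeasure (lamP (gr P x)) A = (\<integral>\<^sup>+ \<sigma>'. \<integral>\<^sup>+ \<tau>'. indicator A (\<sigma>', g, \<tau>') \<partial>lamT (gr T t) \<partial>lamS (gr S s))"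
    unfolding rxe by (rule emeasure_lamP_iter[OF rsU g rtU A_meas])
  also have "\<dots> = (\<integral>\<^sup>+ \<sigma>'. \<integral>\<^sup>+ \<tau>'. indicator E (mfun S s \<sigma>', h0, mfun T t \<tau>') \<partial>lamT (gr T t) \<partial>lamS (gr S s))"
  proof (rule nn_integral_cong_AE)
    show "AE \<sigma>' in lamS (gr S s). (\<integral>\<^sup>+ \<tau>'. indicator A (\<sigma>', g, \<tau>') \<partial>lamT (gr T t)) =
             (\<integral>\<^sup>+ \<tau>'. indicator E (mfun S s \<sigma>', h0, mfun T t \<tau>') \<partial>lamT (gr T t))"
      using AE_fibS[OF rsU]
    proof eventually_elim
      case (elim \<sigma>')
      show ?case
      proof (rule nn_integral_cong_AE)
        show "AE \<tau>' in lamT (gr T t). indicator A (\<sigma>', g, \<tau>') = (indicator E (mfun S s \<sigma>', h0, mfun T t \<tau>') :: ennreal)"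
          using AE_fibT[OF rtU]
        proof eventually_elim
          case (elim \<tau>')
          show ?case using C1[OF \<open>\<sigma>' \<in> rfib S (gr S s)\<close> elim] by (simp add: indicator_def)
        qed
      qed
    qed
  qed
  also have "\<dots> = (\<integral>\<^sup>+ \<sigma>'. \<Phi> (mfun S s \<sigma>') \<partial>lamS (gr S s))"
  proof (rule nn_integral_cong)
    fix \<sigma>' assume "\<sigma>' \<in> space (lamS (gr S s))"
    then have "\<sigma>' \<in> garr S" using spS[OF rsU] by simp
    then have a: "mfun S s \<sigma>' \<in> garr S" by (rule mfunS_arr[OF s])
    show "(\<integral>\<^sup>+ \<tau>'. indicator E (mfun S s \<sigma>', h0, mfun T t \<tau>') \<partial>lamT (gr T t)) = \<Phi> (mfun S s \<sigma>')"
      unfolding \<Phi>_def by (rule LI_T[OF t sec_meas_T[OF dsU h0(1) dtU EN a], symmetric])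
  qed
  also have "\<dots> = (\<integral>\<^sup>+ \<sigma>. \<Phi> \<sigma> \<partial>lamS (gd S s))"
    unfolding \<Phi>_def by (rule LI_S[OF s sec_meas_S[OF dsU h0(1) dtU EN], symmetric])
  also have "\<dots> = emeasure (lamP (gd P x)) E"
    unfolding dxe \<Phi>_def by (rule emeasure_lamP_iter[OF dsU h0(1) dtU E, symmetric])
  finally show "emeasure (lamP (gd P x)) E = emeasure (lamP (gr P x)) (ltrans P x (E \<inter> rfib P (gd P x)))"
    unfolding A_def by simp
qed

end

theorem theorem4p2:
  fixes S :: "('s, 'x) tgroupoid_scheme" and G :: "('g, 'y) tgroupoid_scheme"
    and T :: "('t, 'z) tgroupoid_scheme"
    and lamS :: "'s \<Rightarrow> 's measure" and lamG :: "'g \<Rightarrow> 'g measure" and lamT :: "'t \<Rightarrow> 't measure"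
    and muS :: "'s measure" and muG :: "'g measure" and muT :: "'t measure"
    and p :: "'s \<Rightarrow> 'g" and q :: "'t \<Rightarrow> 'g"
  assumes "haar_groupoid S lamS muS"
    and "haar_groupoid G lamG muG"
    and "haar_groupoid T lamT muT"
    and "haar_hom S lamS muS G lamG muG p"
    and "haar_hom T lamT muT G lamG muG q"
  shows "cont_left_haar_system (weak_pullback S G T p q) (pullback_system S G T p q lamS lamT)"
proof -
  interpret pbk S G T lamS lamT p q
  proof
    show "lcsc_groupoid S" "lcsc_groupoid G" "lcsc_groupoid T"
      using assms(1-3) unfolding haar_groupoid_def by blast+
    show "cont_left_haar_system S lamS" "cont_left_haar_system T lamT"
      using assms(1,3) unfolding haar_groupoid_def by blast+
    show "continuous_map (gtop S) (gtop G) p" "groupoid_hom S G p"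
      using assms(4) unfolding haar_hom_def by blast+
    show "continuous_map (gtop T) (gtop G) q" "groupoid_hom T G q"
      using assms(5) unfolding haar_hom_def by blast+
  qed
  show ?thesis unfolding cont_left_haar_system_def using sys_P cont_P li_P pos_P by blast
qed

end
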